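(* Let $X$ be a Banach lattice and $1<p<\infty$, with $p^{\ast}$ defined by $1/p+1/p^{\ast}=1$. Then the Banach lattice $\ell_{p^{\ast},|\omega|}(X^{\ast})$ is lattice isomorphic and isometrically isomorphic to the dual $\left[\ell_{p}^{\pi}(X)\right]^{\ast}$ (via the map sending $(x_n^{\ast})_n$ to the functional $(x_n)_n\mapsto\sum_{n=1}^\infty x_n^{\ast}(x_n)$).
   Context: For a Banach lattice $X$, $X_+$ denotes its positive cone, $|x|=\sup\{x,-x\}$, and $X^{\ast}$ is the dual Banach lattice with order $x_1^{\ast}\le x_2^{\ast}$ iff $\langle x_1^{\ast},x\rangle\le\langle x_2^{\ast},x\rangle$ for all $x\in X_+$. For $1\le r<\infty$, $\ell_{r,|\omega|}(X^{\ast})$ is the space of sequences $(x_n^{\ast})_n$ in $X^{\ast}$ with $\sum_n\langle x,|x_n^{\ast}|\rangle^{r}<\infty$ for all $x\in X_+$, normed by $\|(x_n^{\ast})_n\|_{r,|\omega|}=\sup_{x\in B_X\cap X_+}(\sum_n\langle |x_n^{\ast}|,x\rangle^{r})^{1/r}$; it is a Banach lattice with the coordinatewise order. The space $\ell_p^{\pi}(X)$ (positive strongly $p$-summable sequences) consists of sequences $(x_n)_n$ in $X$ with $\sum_n|\langle x_n^{\ast},|x_n|\rangle|<\infty$ for every positive $(x_n^{\ast})_n\in\ell_{p^{\ast},|\omega|}(X^{\ast})$, with norm $\|(x_n)_n\|_{\ell_p^{\pi}(X)}=\sup\sum_{n}\langle x_n^{\ast},|x_n|\rangle$, the supremum over positive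 $(x_n^{\ast})_n$ in the closed unit ball of $\ell_{p^{\ast},|\omega|}(X^{\ast})$; it is a Banach lattice with coordinatewise order. *)

theory Defs
  imports "HOL-Analysis.Analysis"
begin

definition labs :: "'a::{lattice, uminus} \<Rightarrow> 'a" where
  "labs x = sup x (- x)"

class banach_lattice = banach + ordered_real_vector + lattice +
  assumes lattice_norm: "sup x (- x) \<le> sup y (- y) \<Longrightarrow> norm x \<le> norm y"

definition dual_le :: "('a::banach_lattice \<Rightarrow>\<^sub>L real) \<Rightarrow> ('a \<Rightarrow>\<^sub>L real) \<Rightarrow> bool" where
  "dual_le f g \<longleftrightarrow> (\<forall>x. 0 \<le> x \<longrightarrow> blinfun_apply f x \<le> blinfun_apply g x)"

definition dual_abs :: "('a::banach_lattice \<Rightarrow>\<^sub>L real) \<Rightarrow> ('a \<Rightarrow>\<^sub>L real)" where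
  "dual_abs f = (THE h. dual_le f h \<and> dual_le (- f) h \<and>
                   (\<forall>k. dual_le f k \<and> dual_le (- f) k \<longrightarrow> dual_le h k))"

definition in_lw :: "real \<Rightarrow> (nat \<Rightarrow> ('a::banach_lattice \<Rightarrow>\<^sub>L real)) \<Rightarrow> bool" where
  "in_lw r F \<longleftrightarrow> (\<forall>x. 0 \<le> x \<longrightarrow> summable (\<lambda>n. (blinfun_apply (dual_abs (F n)) x) powr r))"

definition lw_norm :: "real \<Rightarrow> (nat \<Rightarrow> ('a::banach_lattice \<Rightarrow>\<^sub>L real)) \<Rightarrow> real" where
  "lw_norm r F = (SUP x\<in>{x. 0 \<le> x \<and> norm x \<le> 1}.
                    (\<Sum>n. (blinfun_apply (dual_abs (F n)) x) powr r) powr (1 / r))"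

definition pos_seq :: "(nat \<Rightarrow> ('a::banach_lattice \<Rightarrow>\<^sub>L real)) \<Rightarrow> bool" where
  "pos_seq F \<longleftrightarrow> (\<forall>n. dual_le 0 (F n))"

text \<open>q is the conjugate exponent p* (given explicitly).\<close>

definition in_lpi :: "real \<Rightarrow> (nat \<Rightarrow> 'a::banach_lattice) \<Rightarrow> bool" where
  "in_lpi q xs \<longleftrightarrow> (\<forall>F. in_lw q F \<and> pos_seq F \<longrightarrow>
       summable (\<lambda>n. \<bar>blinfun_apply (F n) (labs (xs n))\<bar>))"

definition lpi_norm :: "real \<Rightarrow> (nat \<Rightarrow> 'a::banach_lattice) \<Rightarrow> real" where
  "lpi_norm q xs = (SUP F\<in>{F. in_lw q F \<and> pos_seq F \<and> lw_norm q F \<le> 1}.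
                      (\<Sum>n. blinfun_apply (F n) (labs (xs n))))"

text \<open>Bounded linear functionals on the subspace L = l_p^pi(X); two functionals
  are the same element of the dual when they agree on L.\<close>

definition linear_on_set :: "(nat \<Rightarrow> 'b::real_vector) set \<Rightarrow> ((nat \<Rightarrow> 'b) \<Rightarrow> real) \<Rightarrow> bool" where
  "linear_on_set L \<phi> \<longleftrightarrow> (\<forall>x\<in>L. \<forall>y\<in>L. \<phi> (\<lambda>n. x n + y n) = \<phi> x + \<phi> y) \<and>
                          (\<forall>x\<in>L. \<forall>c. \<phi> (\<lambda>n. c *\<^sub>R x n) = c * \<phi> x)"

definition lpi_dual :: "real \<Rightarrow> ((nat \<Rightarrow> 'a::banach_lattice) \<Rightarrow> real) \<Rightarrow> bool" where
  "lpi_dual q \<phi> \<longleftrightarrow> linear_on_set {xs. in_lpi q xs} \<phi> \<and>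
      (\<exists>C. \<forall>xs. in_lpi q xs \<longrightarrow> \<bar>\<phi> xs\<bar> \<le> C * lpi_norm q xs)"

definition lpi_dual_norm :: "real \<Rightarrow> ((nat \<Rightarrow> 'a::banach_lattice) \<Rightarrow> real) \<Rightarrow> real" where
  "lpi_dual_norm q \<phi> = (SUP xs\<in>{xs. in_lpi q xs \<and> lpi_norm q xs \<le> 1}. \<bar>\<phi> xs\<bar>)"

definition lpi_dual_le :: "real \<Rightarrow> ((nat \<Rightarrow> 'a::banach_lattice) \<Rightarrow> real) \<Rightarrow> ((nat \<Rightarrow> 'a) \<Rightarrow> real) \<Rightarrow> bool" where
  "lpi_dual_le q \<phi> \<psi> \<longleftrightarrow> (\<forall>xs. in_lpi q xs \<and> (\<forall>n. 0 \<le> xs n) \<longrightarrow> \<phi> xs \<le> \<psi> xs)"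

definition canon :: "(nat \<Rightarrow> ('a::banach_lattice \<Rightarrow>\<^sub>L real)) \<Rightarrow> (nat \<Rightarrow> 'a) \<Rightarrow> real" where
  "canon F xs = (\<Sum>n. blinfun_apply (F n) (xs n))"

end

theory Submission
  imports Defs "HOL-Library.Lattice_Algebras"
begin


context banach_lattice begin
subclass lattice_ab_group_add ..
end

lemma labs_prts: "labs (x::'a::banach_lattice) = pprt x - nprt x"
proof -
  have a: "x \<le> sup x (-x)" and b: "- x \<le> sup x (-x)" by auto
  have "0 \<le> sup x (-x)" using add_mono [OF a b] by simp
  then have "sup (sup x (- x)) 0 = sup x (- x)" by (rule sup_absorb1)
  then show ?thesis
    by (simp add: add_sup_inf_distribs ac_simps pprt_def nprt_def labs_def)
qed

lemma labs_ge: "(x::'a::banach_lattice) \<le> labs x" "- x \<le> labs x"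
  by (auto simp: labs_def)

lemma labs_nonneg: "0 \<le> labs (x::'a::banach_lattice)"
proof -
  have "x + - x \<le> labs x + labs x" by (rule add_mono[OF labs_ge])
  then show ?thesis by simp
qed

lemma labs_pos: "0 \<le> (x::'a::banach_lattice) \<Longrightarrow> labs x = x"
  unfolding labs_def by (rule sup_absorb1) (meson neg_le_0_iff_le order_trans)

lemma labs_0[simp]: "labs (0::'a::banach_lattice) = 0" by (simp add: labs_pos)

lemma labs_labs: "labs (labs (x::'a::banach_lattice)) = labs x"
  by (simp add: labs_pos labs_nonneg)

lemma norm_labs: "norm (labs (x::'a::banach_lattice)) = norm x"
  using lattice_norm[of x "labs x"] lattice_norm[of "labs x" x]
  by (metis labs_def labs_labs order_refl antisym)

lemma labs_le: "(z::'a::banach_lattice) \<le> x \<Longrightarrow> - z \<le> x \<Longrightarrow> labs z \<le> x"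
  by (simp add: labs_def)

lemma norm_mono_pos: "0 \<le> (y::'a::banach_lattice) \<Longrightarrow> y \<le> x \<Longrightarrow> norm y \<le> norm x"
proof -
  assume a: "0 \<le> y" "y \<le> x"
  then have "0 \<le> x" by simp
  then show ?thesis using a lattice_norm[of y x] labs_pos[of y] labs_pos[of x]
    unfolding labs_def by simp
qed

lemma pprt_le_labs: "pprt (x::'a::banach_lattice) \<le> labs x"
  by (simp add: labs_prts)
lemma nprt_le_labs: "- nprt (x::'a::banach_lattice) \<le> labs x"
  by (simp add: labs_prts)
lemma norm_pprt: "norm (pprt (x::'a::banach_lattice)) \<le> norm x"
  using norm_mono_pos[OF zero_le_pprt pprt_le_labs] norm_labs by metis
lemma norm_nprt: "norm (nprt (x::'a::banach_lattice)) \<le> norm x"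
proof -
  have "norm (- nprt x) \<le> norm (labs x)"
    by (rule norm_mono_pos) (auto simp: nprt_le_labs)
  then show ?thesis by (simp add: norm_labs)
qed

lemma scaleR_sup_pos:
  assumes "0 \<le> c" shows "c *\<^sub>R sup a b = sup (c *\<^sub>R a) (c *\<^sub>R (b::'a::banach_lattice))"
proof (cases "c = 0")
  case True then show ?thesis by simp
next
  case False
  with assms have c: "0 < c" by simp
  show ?thesis
  proof (rule antisym)
    have "sup a b \<le> (1/c) *\<^sub>R sup (c *\<^sub>R a) (c *\<^sub>R b)"
    proof (rule sup_least)
      have "a = (1/c) *\<^sub>R (c *\<^sub>R a)" using c by simp
      also have "\<dots> \<le> (1/c) *\<^sub>R sup (c *\<^sub>R a) (c *\<^sub>R b)"
        by (rule scaleR_left_mono) (use c in auto)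
      finally show "a \<le> (1/c) *\<^sub>R sup (c *\<^sub>R a) (c *\<^sub>R b)" .
      have "b = (1/c) *\<^sub>R (c *\<^sub>R b)" using c by simp
      also have "\<dots> \<le> (1/c) *\<^sub>R sup (c *\<^sub>R a) (c *\<^sub>R b)"
        by (rule scaleR_left_mono) (use c in auto)
      finally show "b \<le> (1/c) *\<^sub>R sup (c *\<^sub>R a) (c *\<^sub>R b)" .
    qed
    then have "c *\<^sub>R sup a b \<le> c *\<^sub>R ((1/c) *\<^sub>R sup (c *\<^sub>R a) (c *\<^sub>R b))"
      by (rule scaleR_left_mono) (use c in auto)
    then show "c *\<^sub>R sup a b \<le> sup (c *\<^sub>R a) (c *\<^sub>R b)" using c by simp
    show "sup (c *\<^sub>R a) (c *\<^sub>R b) \<le> c *\<^sub>R sup a b"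
      by (rule sup_least) (auto intro!: scaleR_left_mono c[THEN less_imp_le])
  qed
qed

lemma labs_scaleR: "labs (c *\<^sub>R (x::'a::banach_lattice)) = \<bar>c\<bar> *\<^sub>R labs x"
proof (cases "0 \<le> c")
  case True
  then show ?thesis unfolding labs_def by (simp add: scaleR_sup_pos)
next
  case False
  have "labs (c *\<^sub>R x) = sup ((-c) *\<^sub>R (-x)) ((-c) *\<^sub>R x)"
    unfolding labs_def by (simp only: scaleR_minus_left scaleR_minus_right minus_minus)
  also have "\<dots> = (-c) *\<^sub>R sup (-x) x"
    by (rule scaleR_sup_pos[symmetric]) (use False in simp)
  also have "\<dots> = \<bar>c\<bar> *\<^sub>R labs x" using False
    by (simp only: labs_def sup_commute[of "-x" x] abs_of_neg not_le)
  finally show ?thesis .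
qed

lemma riesz_decomp:
  fixes x z y :: "'a::banach_lattice"
  assumes "0 \<le> x" "0 \<le> z" "0 \<le> y" "y \<le> x + z"
  shows "\<exists>y1 y2. y = y1 + y2 \<and> 0 \<le> y1 \<and> y1 \<le> x \<and> 0 \<le> y2 \<and> y2 \<le> z"
proof (intro exI conjI)
  show "y = inf y x + (y - inf y x)" by (metis add.commute diff_add_cancel)
  show "0 \<le> inf y x" using assms by simp
  show "inf y x \<le> x" by simp
  show "0 \<le> y - inf y x" by (metis diff_ge_0_iff_ge inf.cobounded1)
  have "y - inf y x = y + sup (- y) (- x)" by (rule diff_inf_eq_sup)
  also have "\<dots> = sup (y + - y) (y + - x)" by (rule add_sup_distrib_left)
  finally have "y - inf y x = sup 0 (y - x)" by (metis diff_conv_add_uminus add.right_inverse)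
  also have "\<dots> \<le> z" using assms by (simp add: algebra_simps)
  finally show "y - inf y x \<le> z" .
qed




declare uminus_blinfun.rep_eq[simp] zero_blinfun.rep_eq[simp]

lemma blin_prts: "blinfun_apply (f::'a::banach_lattice \<Rightarrow>\<^sub>L real) x = blinfun_apply f (pprt x) - blinfun_apply f (- nprt x)"
proof -
  have "blinfun_apply f x = blinfun_apply f (pprt x + nprt x)" by (metis prts)
  then show ?thesis by (simp add: blinfun.add_right blinfun.minus_right)
qed

lemma dual_le_antisym:
  assumes "dual_le a b" "dual_le b (a::'a::banach_lattice \<Rightarrow>\<^sub>L real)" shows "a = b"
proof (rule blinfun_eqI)
  fix x :: 'a
  have "0 \<le> - nprt x" by simp
  then show "blinfun_apply a x = blinfun_apply b x"
    using assms unfolding dual_le_def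
    by (metis blin_prts zero_le_pprt order_antisym)
qed

definition ub_abs :: "('a::banach_lattice \<Rightarrow>\<^sub>L real) \<Rightarrow> ('a \<Rightarrow>\<^sub>L real) \<Rightarrow> bool" where
  "ub_abs f h \<longleftrightarrow> dual_le f h \<and> dual_le (- f) h \<and>
                   (\<forall>k. dual_le f k \<and> dual_le (- f) k \<longrightarrow> dual_le h k)"

lemma dual_abs_eqI: "ub_abs f h \<Longrightarrow> dual_abs f = h"
  unfolding dual_abs_def ub_abs_def[symmetric]
  by (rule the_equality) (auto simp: ub_abs_def intro: dual_le_antisym)

lemma dual_abs_pos: "dual_le 0 g \<Longrightarrow> dual_abs g = g"
proof (rule dual_abs_eqI)
  assume g: "dual_le 0 g"
  have "\<forall>x. 0 \<le> x \<longrightarrow> - blinfun_apply g x \<le> blinfun_apply g x"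
  proof (intro allI impI)
    fix x :: 'a assume "0 \<le> x"
    then have "0 \<le> blinfun_apply g x" using g unfolding dual_le_def by simp
    then show "- blinfun_apply g x \<le> blinfun_apply g x" by simp
  qed
  then show "ub_abs g g" unfolding ub_abs_def dual_le_def by (simp add: uminus_blinfun.rep_eq)
qed

lemma pos_mono: "dual_le 0 g \<Longrightarrow> x \<le> y \<Longrightarrow> blinfun_apply g x \<le> blinfun_apply g y"
proof -
  assume "dual_le 0 g" "x \<le> y"
  then have "0 \<le> blinfun_apply g (y - x)" unfolding dual_le_def by simp
  then show ?thesis by (simp add: blinfun.diff_right)
qed

section \<open>Riesz-Kantorovich\<close>

locale RK =
  fixes f :: "'a::banach_lattice \<Rightarrow>\<^sub>L real"
begin

definition P :: "'a \<Rightarrow> real" where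
  "P x = (SUP y\<in>{y. 0 \<le> y \<and> y \<le> x}. blinfun_apply f y)"

lemma P_bdd: "bdd_above (blinfun_apply f ` {y. 0 \<le> y \<and> y \<le> x})"
proof (rule bdd_aboveI2)
  fix y assume "y \<in> {y. 0 \<le> y \<and> y \<le> x}"
  then have "norm y \<le> norm x" by (auto intro: norm_mono_pos)
  then have "blinfun_apply f y \<le> norm f * norm x"
  proof -
    have "blinfun_apply f y \<le> norm f * norm y" using norm_blinfun[of f y] by simp
    also have "\<dots> \<le> norm f * norm x" using \<open>norm y \<le> norm x\<close> by (simp add: mult_left_mono)
    finally show ?thesis .
  qed
  then show "blinfun_apply f y \<le> norm f * norm x" .
qed

lemma P_ub: "0 \<le> y \<Longrightarrow> y \<le> x \<Longrightarrow> blinfun_apply f y \<le> P x"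
  unfolding P_def by (rule cSUP_upper[OF _ P_bdd]) simp

lemma P_least: "0 \<le> x \<Longrightarrow> (\<And>y. 0 \<le> y \<Longrightarrow> y \<le> x \<Longrightarrow> blinfun_apply f y \<le> c) \<Longrightarrow> P x \<le> c"
  unfolding P_def by (rule cSUP_least) force+

lemma P_nonneg: "0 \<le> x \<Longrightarrow> 0 \<le> P x"
  using P_ub[of 0 x] by (metis blinfun.zero_right order_refl)

lemma P_ge: "0 \<le> x \<Longrightarrow> blinfun_apply f x \<le> P x"
  using P_ub[of x x] by blast

lemma P_le_norm: "0 \<le> x \<Longrightarrow> P x \<le> norm f * norm x"
proof (rule P_least)
  fix y assume "0 \<le> y" "y \<le> x"
  then have "norm y \<le> norm x" by (auto intro: norm_mono_pos)
  then show "blinfun_apply f y \<le> norm f * norm x"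
  proof -
    have "blinfun_apply f y \<le> norm f * norm y" using norm_blinfun[of f y] by simp
    also have "\<dots> \<le> norm f * norm x" using \<open>norm y \<le> norm x\<close> by (simp add: mult_left_mono)
    finally show ?thesis .
  qed
qed

lemma P_add:
  assumes x: "0 \<le> x" and z: "0 \<le> z" shows "P (x + z) = P x + P z"
proof (rule antisym)
  show "P (x + z) \<le> P x + P z"
  proof (rule P_least)
    show "0 \<le> x + z" using x z by simp
    fix y assume "0 \<le> y" "y \<le> x + z"
    then obtain y1 y2 where "y = y1 + y2" "0 \<le> y1" "y1 \<le> x" "0 \<le> y2" "y2 \<le> z"
      using riesz_decomp[OF x z] by blast
    then have "blinfun_apply f y = blinfun_apply f y1 + blinfun_apply f y2"
      by (simp add: blinfun.add_right)
    also have "\<dots> \<le> P x + P z"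
      by (rule add_mono; rule P_ub) fact+
    finally show "blinfun_apply f y \<le> P x + P z" .
  qed
  have "P x \<le> P (x + z) - P z"
  proof (rule P_least[OF x])
    fix y1 assume y1: "0 \<le> y1" "y1 \<le> x"
    have "P z \<le> P (x + z) - blinfun_apply f y1"
    proof (rule P_least[OF z])
      fix y2 assume "0 \<le> y2" "y2 \<le> z"
      then have "blinfun_apply f (y1 + y2) \<le> P (x + z)"
        using y1 by (intro P_ub add_nonneg_nonneg add_mono)
      then show "blinfun_apply f y2 \<le> P (x + z) - blinfun_apply f y1"
        by (simp add: blinfun.add_right)
    qed
    then show "blinfun_apply f y1 \<le> P (x + z) - P z" by simp
  qed
  then show "P x + P z \<le> P (x + z)" by simp
qed

lemma P_0: "P 0 = 0"
proof (rule antisym)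
  show "P 0 \<le> 0"
  proof (rule P_least)
    fix y :: 'a assume "0 \<le> y" "y \<le> 0"
    then have "y = 0" by (rule antisym[rotated])
    then show "blinfun_apply f y \<le> 0" by simp
  qed simp
  show "0 \<le> P 0" by (rule P_nonneg) simp
qed

lemma P_scale:
  assumes c: "0 \<le> c" and x: "0 \<le> x" shows "P (c *\<^sub>R x) = c * P x"
proof (cases "c = 0")
  case True then show ?thesis by (simp add: P_0)
next
  case False
  with c have c: "0 < c" by simp
  have cx: "0 \<le> c *\<^sub>R x" using c x by (intro scaleR_nonneg_nonneg) auto
  show ?thesis
  proof (rule antisym)
    show "P (c *\<^sub>R x) \<le> c * P x"
    proof (rule P_least[OF cx])
      fix y assume y: "0 \<le> y" "y \<le> c *\<^sub>R x"
      have "0 \<le> (1/c) *\<^sub>R y" using y c by (intro scaleR_nonneg_nonneg) auto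
      moreover have "(1/c) *\<^sub>R y \<le> (1/c) *\<^sub>R (c *\<^sub>R x)"
        using y c by (intro scaleR_left_mono) auto
      ultimately have "blinfun_apply f ((1/c) *\<^sub>R y) \<le> P x" using c by (intro P_ub) auto
      then have "(1/c) * blinfun_apply f y \<le> P x" by (simp add: blinfun.scaleR_right)
      then show "blinfun_apply f y \<le> c * P x" using c by (simp add: field_simps)
    qed
    have "P x \<le> P (c *\<^sub>R x) / c"
    proof (rule P_least[OF x])
      fix y assume y: "0 \<le> y" "y \<le> x"
      have "blinfun_apply f (c *\<^sub>R y) \<le> P (c *\<^sub>R x)"
        using y c by (intro P_ub scaleR_left_mono scaleR_nonneg_nonneg) auto
      then show "blinfun_apply f y \<le> P (c *\<^sub>R x) / c" using c
        by (simp add: blinfun.scaleR_right field_simps)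
    qed
    then show "c * P x \<le> P (c *\<^sub>R x)" using c by (simp add: field_simps)
  qed
qed

definition m :: "'a \<Rightarrow> real" where "m x = 2 * P x - blinfun_apply f x"

lemma m_add: "0 \<le> x \<Longrightarrow> 0 \<le> z \<Longrightarrow> m (x + z) = m x + m z"
  by (simp add: m_def P_add blinfun.add_right)

lemma m_scale: "0 \<le> c \<Longrightarrow> 0 \<le> x \<Longrightarrow> m (c *\<^sub>R x) = c * m x"
  by (simp add: m_def P_scale blinfun.scaleR_right algebra_simps)

lemma m_0: "m 0 = 0" by (simp add: m_def P_0)

lemma m_diff:
  assumes "0 \<le> a" "0 \<le> b" "0 \<le> a'" "0 \<le> b'" "a - b = a' - b'"
  shows "m a - m b = m a' - m b'"
proof -
  have "a + b' = a' + b" using assms(5) by (simp add: algebra_simps)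
  then have "m (a + b') = m (a' + b)" by simp
  then show ?thesis using assms by (simp add: m_add)
qed

lemma m_bound: "0 \<le> x \<Longrightarrow> \<bar>m x\<bar> \<le> 3 * norm f * norm x"
proof -
  assume x: "0 \<le> x"
  have a: "\<bar>blinfun_apply f x\<bar> \<le> norm f * norm x" using norm_blinfun[of f x] by simp
  have "0 \<le> m x" using P_ge[OF x] P_nonneg[OF x] by (simp add: m_def)
  moreover have "m x \<le> 3 * norm f * norm x" using P_le_norm[OF x] a by (simp add: m_def)
  ultimately show ?thesis by simp
qed

definition M :: "'a \<Rightarrow> real" where "M x = m (pprt x) - m (- nprt x)"

lemma prts_diff: "pprt x - (- nprt x) = (x::'a)"
  by (metis diff_minus_eq_add prts)

lemma M_eq: "0 \<le> a \<Longrightarrow> 0 \<le> b \<Longrightarrow> x = a - b \<Longrightarrow> M x = m a - m b"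
  unfolding M_def by (rule m_diff) (simp_all only: zero_le_pprt neg_0_le_iff_le nprt_le_zero prts_diff)

lemma M_pos: "0 \<le> x \<Longrightarrow> M x = m x"
  using M_eq[of x 0 x] by (simp add: m_0)

lemma M_bl: "bounded_linear M"
proof (rule bounded_linear_intro)
  fix x y :: 'a
  have e: "x + y = (pprt x + pprt y) - (- nprt x + - nprt y)"
  proof -
    have "(pprt x + pprt y) - (- nprt x + - nprt y) = (pprt x + nprt x) + (pprt y + nprt y)"
      by (simp add: algebra_simps)
    then show ?thesis by (simp only: prts[symmetric])
  qed
  have "M (x + y) = m (pprt x + pprt y) - m (- nprt x + - nprt y)"
    by (rule M_eq[OF _ _ e]) (intro add_nonneg_nonneg; simp)+
  also have "\<dots> = M x + M y"
  proof -
    have 1: "m (- nprt x + - nprt y) = m (- nprt x) + m (- nprt y)" by (rule m_add) simp_all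
    have 2: "m (pprt x + pprt y) = m (pprt x) + m (pprt y)" by (rule m_add) simp_all
    show ?thesis unfolding 1 2 M_def by simp
  qed
  finally show "M (x + y) = M x + M y" .
next
  fix r and x :: 'a
  show "M (r *\<^sub>R x) = r *\<^sub>R M x"
  proof (cases "0 \<le> r")
    case True
    have e: "r *\<^sub>R x = r *\<^sub>R pprt x - r *\<^sub>R (- nprt x)"
    proof -
      have "r *\<^sub>R pprt x - r *\<^sub>R (- nprt x) = r *\<^sub>R (pprt x + nprt x)"
        by (simp add: algebra_simps)
      then show ?thesis by (simp only: prts[symmetric])
    qed
    have "M (r *\<^sub>R x) = m (r *\<^sub>R pprt x) - m (r *\<^sub>R (- nprt x))"
      by (rule M_eq[OF _ _ e]) (intro scaleR_nonneg_nonneg True; simp)+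
    moreover have "m (r *\<^sub>R pprt x) = r * m (pprt x)" by (rule m_scale) (use True in simp_all)
    moreover have "m (r *\<^sub>R (- nprt x)) = r * m (- nprt x)" by (rule m_scale) (use True in simp_all)
    ultimately show ?thesis by (simp add: right_diff_distrib M_def[of x])
  next
    case False
    have e: "r *\<^sub>R x = (-r) *\<^sub>R (- nprt x) - (-r) *\<^sub>R pprt x"
    proof -
      have "(-r) *\<^sub>R (- nprt x) - (-r) *\<^sub>R pprt x = r *\<^sub>R (pprt x + nprt x)"
        by (simp add: algebra_simps)
      then show ?thesis by (simp only: prts[symmetric])
    qed
    have "M (r *\<^sub>R x) = m ((-r) *\<^sub>R (- nprt x)) - m ((-r) *\<^sub>R pprt x)"
      by (rule M_eq[OF _ _ e]) (intro scaleR_nonneg_nonneg; use False in simp)+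
    moreover have "m ((-r) *\<^sub>R pprt x) = (-r) * m (pprt x)" by (rule m_scale) (use False in simp_all)
    moreover have "m ((-r) *\<^sub>R (- nprt x)) = (-r) * m (- nprt x)" by (rule m_scale) (use False in simp_all)
    ultimately show ?thesis by (simp add: right_diff_distrib M_def[of x])
  qed
next
  fix x :: 'a
  show "norm (M x) \<le> norm x * (6 * norm f)"
  proof -
    have "\<bar>M x\<bar> \<le> \<bar>m (pprt x)\<bar> + \<bar>m (- nprt x)\<bar>" by (simp add: M_def)
    also have "\<dots> \<le> 3 * norm f * norm (pprt x) + 3 * norm f * norm (- nprt x)"
      by (intro add_mono m_bound) auto
    also have "\<dots> \<le> 3 * norm f * norm x + 3 * norm f * norm x"
      using norm_pprt[of x] norm_nprt[of x] by (intro add_mono mult_left_mono) auto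
    finally show "norm (M x) \<le> norm x * (6 * norm f)" by simp
  qed
qed

definition h :: "'a \<Rightarrow>\<^sub>L real" where "h = Blinfun M"

lemma h_apply: "blinfun_apply h = M"
  unfolding h_def by (rule bounded_linear_Blinfun_apply[OF M_bl])

lemma h_pos: "0 \<le> x \<Longrightarrow> blinfun_apply h x = 2 * P x - blinfun_apply f x"
  by (simp add: h_apply M_pos m_def)

lemma h_ub_abs: "ub_abs f h"
  unfolding ub_abs_def
proof (intro conjI allI impI)
  show "dual_le f h" unfolding dual_le_def using P_ge by (simp add: h_pos)
  show "dual_le (- f) h" unfolding dual_le_def using P_ge P_nonneg by (simp add: h_pos)
  fix k assume k: "dual_le f k \<and> dual_le (- f) k"
  show "dual_le h k" unfolding dual_le_def
  proof (intro allI impI)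
    fix x :: 'a assume x: "0 \<le> x"
    have "P x \<le> (blinfun_apply k x + blinfun_apply f x) / 2"
    proof (rule P_least[OF x])
      fix y assume y: "0 \<le> y" "y \<le> x"
      have "blinfun_apply f y \<le> blinfun_apply k y" using k y unfolding dual_le_def by auto
      moreover have "- blinfun_apply f (x - y) \<le> blinfun_apply k (x - y)"
        using k y unfolding dual_le_def by auto
      ultimately show "blinfun_apply f y \<le> (blinfun_apply k x + blinfun_apply f x) / 2"
        by (simp add: blinfun.diff_right)
    qed
    then show "blinfun_apply h x \<le> blinfun_apply k x" using x by (simp add: h_pos)
  qed
qed

lemma h_approx:
  assumes x: "0 \<le> x" and e: "0 < e"
  shows "\<exists>z. labs z \<le> x \<and> blinfun_apply h x - e < blinfun_apply f z"
proof -
  have "\<exists>y. 0 \<le> y \<and> y \<le> x \<and> P x - e/2 < blinfun_apply f y"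
  proof (rule ccontr)
    assume "\<not> ?thesis"
    then have "P x \<le> P x - e/2" by (intro P_least[OF x]) (auto simp: not_less)
    then show False using e by simp
  qed
  then obtain y where y: "0 \<le> y" "y \<le> x" "P x - e/2 < blinfun_apply f y" by blast
  define z where "z = y - (x - y)"
  have "labs z \<le> x"
  proof (rule labs_le)
    have "0 \<le> x - y" using y by simp
    then have "y - (x - y) \<le> y" by simp
    then show "z \<le> x" unfolding z_def using y(2) by (rule order_trans)
    have "- z = x - y - y" unfolding z_def by (simp add: algebra_simps)
    also have "\<dots> \<le> x - y" using y by simp
    also have "\<dots> \<le> x" using y by simp
    finally show "- z \<le> x" .
  qed
  moreover have "blinfun_apply f z = 2 * blinfun_apply f y - blinfun_apply f x"
    unfolding z_def by (simp add: blinfun.diff_right)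
  ultimately show ?thesis using y x by (intro exI[of _ z]) (auto simp: h_pos)
qed

end

lemma dual_abs_char:
  fixes f :: "'a::banach_lattice \<Rightarrow>\<^sub>L real"
  shows "ub_abs f (dual_abs f) \<and>
     (\<forall>x e. 0 \<le> x \<longrightarrow> 0 < e \<longrightarrow> (\<exists>z. labs z \<le> x \<and> blinfun_apply (dual_abs f) x - e < blinfun_apply f z))"
  using RK.h_ub_abs[of f] RK.h_approx[where f=f] dual_abs_eqI[OF RK.h_ub_abs[of f]] by auto

lemma dual_abs_ge:
  fixes f :: "'a::banach_lattice \<Rightarrow>\<^sub>L real"
  assumes "0 \<le> x"
  shows "blinfun_apply f x \<le> blinfun_apply (dual_abs f) x"
    "- blinfun_apply f x \<le> blinfun_apply (dual_abs f) x"
    "0 \<le> blinfun_apply (dual_abs f) x"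
proof -
  show 1: "blinfun_apply f x \<le> blinfun_apply (dual_abs f) x"
    using dual_abs_char[of f] assms unfolding ub_abs_def dual_le_def by auto
  show 2: "- blinfun_apply f x \<le> blinfun_apply (dual_abs f) x"
    using dual_abs_char[of f] assms unfolding ub_abs_def dual_le_def by auto
  show "0 \<le> blinfun_apply (dual_abs f) x" using 1 2 by simp
qed

lemma dual_abs_nonneg: "dual_le 0 (dual_abs f)"
  unfolding dual_le_def by (simp add: dual_abs_ge(3))

lemma dual_abs_approx:
  fixes f :: "'a::banach_lattice \<Rightarrow>\<^sub>L real"
  shows "0 \<le> x \<Longrightarrow> 0 < e \<Longrightarrow> \<exists>z. labs z \<le> x \<and> blinfun_apply (dual_abs f) x - e < blinfun_apply f z"
  using dual_abs_char[of f] by blast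

lemma dual_abs_bound:
  fixes f :: "'a::banach_lattice \<Rightarrow>\<^sub>L real"
  shows "\<bar>blinfun_apply f y\<bar> \<le> blinfun_apply (dual_abs f) (labs y)"
proof -
  let ?k = "blinfun_apply (dual_abs f)"
  have p: "0 \<le> pprt y" and n: "0 \<le> - nprt y" by auto
  have l: "?k (labs y) = ?k (pprt y) + ?k (- nprt y)"
    by (simp add: labs_prts blinfun.diff_right blinfun.minus_right)
  have "blinfun_apply f y \<le> ?k (labs y)"
    using dual_abs_ge[OF p, of f] dual_abs_ge[OF n, of f] l blin_prts[of f y] by linarith
  moreover have "- blinfun_apply f y \<le> ?k (labs y)"
    using dual_abs_ge[OF p, of f] dual_abs_ge[OF n, of f] l blin_prts[of f y] by linarith
  ultimately show ?thesis by simp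
qed




locale conj =
  fixes p q :: real
  assumes p1: "1 < p" and pq: "1/p + 1/q = 1"
begin

lemma q1: "1 < q"
proof -
  have "1/p < 1" using p1 by simp
  moreover have "1/q = 1 - 1/p" using pq by simp
  ultimately have "0 < 1/q" by simp
  then have qpos: "0 < q" by (simp add: zero_less_divide_iff)
  have "0 < 1/p" using p1 by simp
  then have "1/q < 1" using \<open>1/q = 1 - 1/p\<close> by linarith
  then show ?thesis using qpos by (simp add: divide_less_eq)
qed

lemma p_pos: "0 < p" using p1 by simp
lemma q_pos: "0 < q" using q1 by simp

lemma qp: "(q - 1) * p = q"
proof -
  have "q + p = p * q" using pq p_pos q_pos by (simp add: field_simps)
  then show ?thesis by (simp add: algebra_simps)
qed

definition Sq :: "(nat \<Rightarrow> ('a::banach_lattice \<Rightarrow>\<^sub>L real)) \<Rightarrow> 'a \<Rightarrow> real" where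
  "Sq G x = (\<Sum>n. (blinfun_apply (dual_abs (G n)) x) powr q)"

definition unitp :: "'a::banach_lattice set" where "unitp = {x. 0 \<le> x \<and> norm x \<le> 1}"

lemma lw_norm_Sq: "lw_norm q G = (SUP x\<in>unitp. (Sq G x) powr (1/q))"
  by (simp add: lw_norm_def Sq_def unitp_def)

lemma in_lw_summable: "in_lw q G \<Longrightarrow> 0 \<le> x \<Longrightarrow> summable (\<lambda>n. (blinfun_apply (dual_abs (G n)) x) powr q)"
  by (simp add: in_lw_def)

lemma Sq_nonneg: "in_lw q G \<Longrightarrow> 0 \<le> x \<Longrightarrow> 0 \<le> Sq G x"
  unfolding Sq_def by (rule suminf_nonneg) (auto simp: in_lw_summable)

lemma Sq_zero: "Sq G 0 = 0"
  by (simp add: Sq_def q_pos)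

lemma unitp_0: "0 \<in> unitp" by (simp add: unitp_def)

lemma term_le_Sq: "in_lw q G \<Longrightarrow> 0 \<le> x \<Longrightarrow> (blinfun_apply (dual_abs (G n)) x) powr q \<le> Sq G x"
  unfolding Sq_def
  using sum_le_suminf[of "\<lambda>n. (blinfun_apply (dual_abs (G n)) x) powr q" "{n}"]
  by (simp add: in_lw_summable)

lemma LWB:
  assumes G: "in_lw q G"
  shows "\<exists>K. \<forall>x. 0 \<le> x \<and> norm x \<le> 1 \<longrightarrow> Sq G x \<le> K"
proof (rule ccontr)
  assume "\<not> ?thesis"
  then have "\<forall>k::nat. \<exists>x. 0 \<le> x \<and> norm x \<le> 1 \<and> real k / (((1/2::real)^k) powr q) < Sq G x"
    by (meson not_le)
  then obtain xk where xk: "\<And>k. 0 \<le> xk k" "\<And>k. norm (xk k) \<le> 1"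
    "\<And>k. real k / (((1/2::real)^k) powr q) < Sq G (xk k)"
    by metis
  have sm: "summable (\<lambda>k. (1/2::real)^k *\<^sub>R xk k)"
  proof (rule summable_comparison_test'[where g="\<lambda>k. (1/2::real)^k" and N=0])
    show "summable (\<lambda>k. (1/2::real)^k)" by (rule summable_geometric) simp
    fix k :: nat
    show "norm ((1/2::real)^k *\<^sub>R xk k) \<le> (1/2)^k"
      using xk(2)[of k] by (simp add: mult_left_le)
  qed
  define x where "x = (\<Sum>k. (1/2::real)^k *\<^sub>R xk k)"
  define z where "z = labs x"
  have z0: "0 \<le> z" unfolding z_def by (rule labs_nonneg)
  let ?g = "\<lambda>n. dual_abs (G n)"
  have gz: "(1/2::real)^k * blinfun_apply (?g n) (xk k) \<le> blinfun_apply (?g n) z" for n k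
  proof -
    have s: "(\<lambda>j. blinfun_apply (?g n) ((1/2::real)^j *\<^sub>R xk j)) sums blinfun_apply (?g n) x"
      unfolding x_def by (rule bounded_linear.sums[OF blinfun.bounded_linear_right summable_sums[OF sm]])
    have "(1/2::real)^k * blinfun_apply (?g n) (xk k) = (\<Sum>j\<in>{k}. blinfun_apply (?g n) ((1/2::real)^j *\<^sub>R xk j))"
      by (simp add: blinfun.scaleR_right)
    also have "\<dots> \<le> blinfun_apply (?g n) x"
      unfolding sums_unique[OF s]
    proof (rule sum_le_suminf)
      show "summable (\<lambda>j. blinfun_apply (?g n) ((1/2::real)^j *\<^sub>R xk j))" using s by (rule sums_summable)
      fix j
      show "0 \<le> blinfun_apply (?g n) ((1/2::real)^j *\<^sub>R xk j)"
        using dual_abs_ge(3)[OF xk(1)[of j], of "G n"] by (simp add: blinfun.scaleR_right)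
    qed simp
    also have "\<dots> \<le> blinfun_apply (?g n) z"
      unfolding z_def by (rule pos_mono[OF dual_abs_nonneg labs_ge(1)])
    finally show ?thesis .
  qed
  have key: "real k < Sq G z" for k
  proof -
    define c where "c = ((1/2::real)^k) powr q"
    have c0: "0 < c" unfolding c_def by simp
    have "c * Sq G (xk k) = (\<Sum>n. c * (blinfun_apply (?g n) (xk k)) powr q)"
      unfolding Sq_def by (rule suminf_mult[symmetric]) (rule in_lw_summable[OF G xk(1)])
    also have "\<dots> \<le> Sq G z"
      unfolding Sq_def
    proof (rule suminf_le)
      fix n
      have "c * (blinfun_apply (?g n) (xk k)) powr q = ((1/2::real)^k * blinfun_apply (?g n) (xk k)) powr q"
        unfolding c_def by (simp add: powr_mult)
      also have "\<dots> \<le> (blinfun_apply (?g n) z) powr q"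
        by (rule powr_mono2) (use q_pos gz dual_abs_ge(3)[OF xk(1)[of k], of "G n"] in auto)
      finally show "c * (blinfun_apply (?g n) (xk k)) powr q \<le> (blinfun_apply (?g n) z) powr q" .
      show "summable (\<lambda>n. c * (blinfun_apply (?g n) (xk k)) powr q)"
        by (rule summable_mult) (rule in_lw_summable[OF G xk(1)])
      show "summable (\<lambda>n. (blinfun_apply (?g n) z) powr q)" by (rule in_lw_summable[OF G z0])
    qed
    finally have "c * Sq G (xk k) \<le> Sq G z" .
    moreover have "real k < c * Sq G (xk k)" using xk(3)[of k] c0 unfolding c_def[symmetric]
      by (simp add: divide_less_eq mult.commute)
    ultimately show ?thesis by simp
  qed
  have "real (nat \<lceil>Sq G z\<rceil>) < Sq G z" by (rule key)
  then show False by linarith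
qed

lemma lw_bdd: "in_lw q G \<Longrightarrow> bdd_above ((\<lambda>x. (Sq G x) powr (1/q)) ` unitp)"
proof -
  assume G: "in_lw q G"
  obtain K where K: "\<And>x. 0 \<le> x \<Longrightarrow> norm x \<le> 1 \<Longrightarrow> Sq G x \<le> K" using LWB[OF G] by blast
  show ?thesis
  proof (rule bdd_aboveI2)
    fix x :: 'a assume "x \<in> unitp"
    then have "0 \<le> x" "norm x \<le> 1" by (auto simp: unitp_def)
    then have "Sq G x \<le> max K 0" using K by (simp add: le_max_iff_disj)
    then show "(Sq G x) powr (1/q) \<le> (max K 0) powr (1/q)"
      using Sq_nonneg[OF G \<open>0 \<le> x\<close>] q_pos by (intro powr_mono2) auto
  qed
qed

lemma lw_le: "in_lw q G \<Longrightarrow> 0 \<le> x \<Longrightarrow> norm x \<le> 1 \<Longrightarrow> (Sq G x) powr (1/q) \<le> lw_norm q G"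
  unfolding lw_norm_Sq by (rule cSUP_upper[OF _ lw_bdd]) (auto simp: unitp_def)

lemma lw_nonneg: "in_lw q G \<Longrightarrow> 0 \<le> lw_norm q G"
  using lw_le[of G 0] by (simp add: Sq_zero)

lemma Sq_le_pow: "in_lw q G \<Longrightarrow> 0 \<le> x \<Longrightarrow> norm x \<le> 1 \<Longrightarrow> Sq G x \<le> (lw_norm q G) powr q"
proof -
  assume a: "in_lw q G" "0 \<le> x" "norm x \<le> 1"
  have "Sq G x = ((Sq G x) powr (1/q)) powr q"
    using Sq_nonneg[OF a(1,2)] q_pos by (simp add: powr_powr)
  also have "\<dots> \<le> (lw_norm q G) powr q"
    by (rule powr_mono2) (use q_pos lw_le[OF a] in auto)
  finally show ?thesis .
qed

lemma lw_least: "(\<And>x. 0 \<le> x \<Longrightarrow> norm x \<le> 1 \<Longrightarrow> (Sq G x) powr (1/q) \<le> c) \<Longrightarrow> lw_norm q G \<le> c"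
  unfolding lw_norm_Sq by (rule cSUP_least) (auto simp: unitp_def)

lemma Sq_scale:
  assumes G: "in_lw q G" and c: "0 \<le> c" and x: "0 \<le> x"
  shows "Sq G (c *\<^sub>R x) = c powr q * Sq G x"
proof -
  have "Sq G (c *\<^sub>R x) = (\<Sum>n. c powr q * (blinfun_apply (dual_abs (G n)) x) powr q)"
    unfolding Sq_def using c by (simp add: blinfun.scaleR_right powr_mult)
  also have "\<dots> = c powr q * Sq G x"
    unfolding Sq_def by (rule suminf_mult) (rule in_lw_summable[OF G x])
  finally show ?thesis .
qed


definition Bset :: "(nat \<Rightarrow> ('a::banach_lattice \<Rightarrow>\<^sub>L real)) set" where
  "Bset = {G. in_lw q G \<and> pos_seq G \<and> lw_norm q G \<le> 1}"

lemma lpi_norm_B: "lpi_norm q xs = (SUP G\<in>Bset. \<Sum>n. blinfun_apply (G n) (labs (xs n)))"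
  by (simp add: lpi_norm_def Bset_def)

lemma B_abs: "G \<in> Bset \<Longrightarrow> dual_abs (G n) = G n"
  by (simp add: Bset_def pos_seq_def dual_abs_pos)

lemma B_pos: "G \<in> Bset \<Longrightarrow> 0 \<le> x \<Longrightarrow> 0 \<le> blinfun_apply (G n) x"
  by (simp add: Bset_def pos_seq_def dual_le_def)

lemma B_lw: "G \<in> Bset \<Longrightarrow> in_lw q G" by (simp add: Bset_def)

lemma B_Sq: "G \<in> Bset \<Longrightarrow> 0 \<le> x \<Longrightarrow> norm x \<le> 1 \<Longrightarrow> Sq G x \<le> 1"
proof -
  assume a: "G \<in> Bset" "0 \<le> x" "norm x \<le> 1"
  have "Sq G x \<le> (lw_norm q G) powr q" using Sq_le_pow[OF B_lw[OF a(1)] a(2,3)] .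
  also have "\<dots> \<le> 1 powr q"
    using a(1) lw_nonneg[OF B_lw[OF a(1)]] q_pos by (intro powr_mono2) (auto simp: Bset_def)
  finally show ?thesis by simp
qed

lemma B_Sq_gen: "G \<in> Bset \<Longrightarrow> 0 \<le> x \<Longrightarrow> Sq G x \<le> (norm x) powr q"
proof -
  assume a: "G \<in> Bset" "0 \<le> x"
  show ?thesis
  proof (cases "x = 0")
    case True then show ?thesis by (simp add: Sq_zero)
  next
    case False
    define c where "c = norm x"
    have c: "0 < c" using False by (simp add: c_def)
    define x' where "x' = (1/c) *\<^sub>R x"
    have x': "0 \<le> x'" "norm x' \<le> 1" using a(2) c by (auto simp: x'_def c_def intro: scaleR_nonneg_nonneg)
    have "x = c *\<^sub>R x'" using c by (simp add: x'_def)
    then have "Sq G x = c powr q * Sq G x'" using Sq_scale[OF B_lw[OF a(1)] _ x'(1), of c] c by simp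
    also have "\<dots> \<le> c powr q * 1" using B_Sq[OF a(1) x'] by (intro mult_left_mono) auto
    finally show ?thesis by (simp add: c_def)
  qed
qed

lemma powr_le_cancel: "0 \<le> a \<Longrightarrow> 0 \<le> b \<Longrightarrow> a powr q \<le> b powr q \<Longrightarrow> a \<le> (b::real)"
proof -
  assume ab: "0 \<le> a" "0 \<le> b" "a powr q \<le> b powr q"
  have "(a powr q) powr (1/q) \<le> (b powr q) powr (1/q)"
    by (rule powr_mono2) (use ab q_pos in auto)
  moreover have e: "q * (1/q) = 1" using q_pos by simp
  ultimately show ?thesis using ab by (simp add: powr_powr e powr_one)
qed

lemma B_le_norm: "G \<in> Bset \<Longrightarrow> 0 \<le> x \<Longrightarrow> blinfun_apply (G n) x \<le> norm x"
proof -
  assume a: "G \<in> Bset" "0 \<le> x"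
  have "(blinfun_apply (G n) x) powr q \<le> Sq G x"
    using term_le_Sq[OF B_lw[OF a(1)] a(2), of n] B_abs[OF a(1)] by simp
  also have "\<dots> \<le> (norm x) powr q" by (rule B_Sq_gen[OF a])
  finally show ?thesis by (rule powr_le_cancel[OF B_pos[OF a] norm_ge_zero])
qed

lemma B_partial: "G \<in> Bset \<Longrightarrow> 0 \<le> x \<Longrightarrow> norm x \<le> 1 \<Longrightarrow> (\<Sum>n<N. (blinfun_apply (G n) x) powr q) \<le> 1"
proof -
  assume a: "G \<in> Bset" "0 \<le> x" "norm x \<le> 1"
  have "(\<Sum>n<N. (blinfun_apply (G n) x) powr q) \<le> Sq G x"
    unfolding Sq_def B_abs[OF a(1)]
    by (rule sum_le_suminf) (use in_lw_summable[OF B_lw[OF a(1)] a(2)] B_abs[OF a(1)] in auto)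
  also have "\<dots> \<le> 1" by (rule B_Sq[OF a])
  finally show ?thesis .
qed

lemma zero_lw: "in_lw q (\<lambda>n. 0)"
proof -
  have d: "dual_abs (0::'a::banach_lattice \<Rightarrow>\<^sub>L real) = 0" by (rule dual_abs_pos) (simp add: dual_le_def)
  show ?thesis unfolding in_lw_def d using q_pos by simp
qed

lemma zero_B: "(\<lambda>n. 0) \<in> Bset"
proof -
  have d: "dual_abs (0::'a::banach_lattice \<Rightarrow>\<^sub>L real) = 0" by (rule dual_abs_pos) (simp add: dual_le_def)
  have "lw_norm q (\<lambda>n. 0::'a \<Rightarrow>\<^sub>L real) \<le> 1"
    by (rule lw_least) (simp add: Sq_def d q_pos)
  then show ?thesis unfolding Bset_def using zero_lw by (simp add: pos_seq_def dual_le_def)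
qed

lemma Bset_ne: "Bset \<noteq> {}" using zero_B by blast

lemma young_sum:
  assumes "\<And>n. n \<in> A \<Longrightarrow> 0 \<le> a n" "\<And>n. n \<in> A \<Longrightarrow> 0 \<le> b n"
    "(\<Sum>n\<in>A. a n powr p) \<le> 1" "(\<Sum>n\<in>A. b n powr q) \<le> 1"
  shows "(\<Sum>n\<in>A. a n * b n) \<le> 1"
proof -
  have "(\<Sum>n\<in>A. a n * b n) \<le> (\<Sum>n\<in>A. a n powr p / p + b n powr q / q)"
    by (rule sum_mono) (rule Youngs_inequality[OF p1 q1 pq]; use assms in auto)
  also have "\<dots> = (\<Sum>n\<in>A. a n powr p) / p + (\<Sum>n\<in>A. b n powr q) / q"
    by (simp add: sum.distrib sum_divide_distrib)
  also have "\<dots> \<le> 1 / p + 1 / q"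
    using assms(3,4) p_pos q_pos by (intro add_mono divide_right_mono) auto
  finally show ?thesis using pq by simp
qed

lemma fin_lpi: "(\<And>n. N \<le> n \<Longrightarrow> xs n = 0) \<Longrightarrow> in_lpi q xs"
  unfolding in_lpi_def
proof (intro allI impI)
  fix F :: "nat \<Rightarrow> 'a \<Rightarrow>\<^sub>L real"
  assume "\<And>n. N \<le> n \<Longrightarrow> xs n = 0"
  then show "summable (\<lambda>n. \<bar>blinfun_apply (F n) (labs (xs n))\<bar>)"
    by (intro summable_finite[of "{..<N}"]) auto
qed

lemma Key:
  assumes x: "0 \<le> x" "norm x \<le> 1"
    and a: "\<And>n. n < N \<Longrightarrow> 0 \<le> a n" "(\<Sum>n<N. a n powr p) \<le> 1"
    and y: "\<And>n. n < N \<Longrightarrow> labs (y n) \<le> x"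
  shows "in_lpi q (\<lambda>n. if n < N then a n *\<^sub>R y n else 0)"
    "lpi_norm q (\<lambda>n. if n < N then a n *\<^sub>R y n else 0) \<le> 1"
proof -
  show "in_lpi q (\<lambda>n. if n < N then a n *\<^sub>R y n else 0)" by (rule fin_lpi[of N]) auto
  show "lpi_norm q (\<lambda>n. if n < N then a n *\<^sub>R y n else 0) \<le> 1"
    unfolding lpi_norm_B
  proof (rule cSUP_least[OF Bset_ne])
    fix G :: "nat \<Rightarrow> 'a \<Rightarrow>\<^sub>L real" assume G: "G \<in> Bset"
    have Gp: "\<And>n. dual_le 0 (G n)" using G by (simp add: Bset_def pos_seq_def)
    have "(\<Sum>n. blinfun_apply (G n) (labs (if n < N then a n *\<^sub>R y n else 0)))
        = (\<Sum>n<N. blinfun_apply (G n) (labs (if n < N then a n *\<^sub>R y n else 0)))"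
      by (rule suminf_finite) auto
    also have "\<dots> = (\<Sum>n<N. a n * blinfun_apply (G n) (labs (y n)))"
      by (rule sum.cong) (auto simp: labs_scaleR blinfun.scaleR_right a(1))
    also have "\<dots> \<le> (\<Sum>n<N. a n * blinfun_apply (G n) x)"
      by (rule sum_mono) (auto intro!: mult_left_mono pos_mono y a(1) Gp)
    also have "\<dots> \<le> 1"
      by (rule young_sum) (use a B_pos[OF G x(1)] B_partial[OF G x] in auto)
    finally show "(\<Sum>n. blinfun_apply (G n) (labs (if n < N then a n *\<^sub>R y n else 0))) \<le> 1" .
  qed
qed

lemma single_lpi: "in_lpi q (\<lambda>k. if k = n then y else 0)"
  by (rule fin_lpi[of "Suc n"]) auto

lemma single_norm: "lpi_norm q (\<lambda>k. if k = n then y else (0::'a::banach_lattice)) \<le> norm y"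
  unfolding lpi_norm_B
proof (rule cSUP_least[OF Bset_ne])
  fix G :: "nat \<Rightarrow> 'a \<Rightarrow>\<^sub>L real" assume G: "G \<in> Bset"
  have "(\<Sum>k. blinfun_apply (G k) (labs (if k = n then y else 0))) = blinfun_apply (G n) (labs y)"
    by (subst suminf_finite[of "{n}"]) auto
  also have "\<dots> \<le> norm (labs y)" by (rule B_le_norm[OF G labs_nonneg])
  finally show "(\<Sum>k. blinfun_apply (G k) (labs (if k = n then y else 0))) \<le> norm y"
    by (simp add: norm_labs)
qed

end



lemma block_sum:
  fixes Nk :: "nat \<Rightarrow> nat" and f :: "nat \<Rightarrow> real"
  assumes "\<And>k. Nk k \<le> Nk (Suc k)" "Nk 0 = 0"
  shows "(\<Sum>n<Nk K. f n) = (\<Sum>k<K. \<Sum>n\<in>{Nk k..<Nk (Suc k)}. f n)"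
proof (induction K)
  case 0 then show ?case using assms(2) by simp
next
  case (Suc K)
  have "(\<Sum>n<Nk (Suc K). f n) = (\<Sum>n\<in>{0..<Nk (Suc K)}. f n)" by (simp add: atLeast0LessThan)
  also have "\<dots> = (\<Sum>n\<in>{0..<Nk K}. f n) + (\<Sum>n\<in>{Nk K..<Nk (Suc K)}. f n)"
    by (rule sum.atLeastLessThan_concat[symmetric]) (use assms(1) in auto)
  also have "(\<Sum>n\<in>{0..<Nk K}. f n) = (\<Sum>n<Nk K. f n)" by (simp add: atLeast0LessThan)
  finally show ?case using Suc by simp
qed

context conj begin

lemma B_u_summable:
  assumes xs: "in_lpi q xs" and G: "G \<in> Bset"
  shows "summable (\<lambda>n. blinfun_apply (G n) (labs (xs n)))"
proof -
  have "summable (\<lambda>n. \<bar>blinfun_apply (G n) (labs (xs n))\<bar>)"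
    using xs G unfolding in_lpi_def Bset_def by blast
  moreover have "\<bar>blinfun_apply (G n) (labs (xs n))\<bar> = blinfun_apply (G n) (labs (xs n))" for n
    using B_pos[OF G labs_nonneg] by simp
  ultimately show ?thesis by simp
qed

lemma tail_summable:
  assumes xs: "in_lpi q xs" and G: "G \<in> Bset"
  shows "summable (\<lambda>n. blinfun_apply (G n) (labs (if n < N then 0 else xs n)))"
proof (rule summable_comparison_test'[OF B_u_summable[OF xs G], where N=0])
  fix n :: nat
  show "norm (blinfun_apply (G n) (labs (if n < N then 0 else xs n))) \<le> blinfun_apply (G n) (labs (xs n))"
    using B_pos[OF G labs_nonneg, of n "xs n"] by auto
qed

lemma tail_mono:
  assumes xs: "in_lpi q xs" and G: "G \<in> Bset" and NN: "N \<le> N'"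
  shows "(\<Sum>n. blinfun_apply (G n) (labs (if n < N' then 0 else xs n)))
       \<le> (\<Sum>n. blinfun_apply (G n) (labs (if n < N then 0 else xs n)))"
proof (rule suminf_le[OF _ tail_summable[OF xs G] tail_summable[OF xs G]])
  fix n
  show "blinfun_apply (G n) (labs (if n < N' then 0 else xs n)) \<le> blinfun_apply (G n) (labs (if n < N then 0 else xs n))"
    using B_pos[OF G labs_nonneg, of n "xs n"] NN by auto
qed

lemma exists_block:
  assumes xs: "in_lpi q xs" and G: "G \<in> Bset"
    and T: "e < (\<Sum>n. blinfun_apply (G n) (labs (if n < N then 0 else xs n)))"
  shows "\<exists>M. N < M \<and> e < (\<Sum>n\<in>{N..<M}. blinfun_apply (G n) (labs (xs n)))"
proof -
  let ?t = "\<lambda>n. blinfun_apply (G n) (labs (if n < N then 0 else xs n))"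
  have "(\<lambda>M. \<Sum>n<M. ?t n) \<longlonglongrightarrow> (\<Sum>n. ?t n)"
    using summable_LIMSEQ[OF tail_summable[OF xs G]] .
  then have "eventually (\<lambda>M. e < (\<Sum>n<M. ?t n)) sequentially"
    using T by (rule order_tendstoD)
  moreover have "eventually (\<lambda>M. N < M) sequentially" by (rule eventually_gt_at_top)
  ultimately have "eventually (\<lambda>M. N < M \<and> e < (\<Sum>n<M. ?t n)) sequentially"
    by (rule eventually_conj[rotated])
  then obtain M0 where "\<And>M. M0 \<le> M \<Longrightarrow> N < M \<and> e < (\<Sum>n<M. ?t n)"
    unfolding eventually_sequentially by blast
  then have M: "N < M0" "e < (\<Sum>n<M0. ?t n)" by auto
  define M where "M = M0"
  note M = M[folded M_def]
  have "(\<Sum>n<M. ?t n) = (\<Sum>n\<in>{0..<M}. ?t n)" by (simp add: atLeast0LessThan)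
  also have "\<dots> = (\<Sum>n\<in>{0..<N}. ?t n) + (\<Sum>n\<in>{N..<M}. ?t n)"
    by (rule sum.atLeastLessThan_concat[symmetric]) (use M in auto)
  also have "(\<Sum>n\<in>{0..<N}. ?t n) = 0" by simp
  also have "(\<Sum>n\<in>{N..<M}. ?t n) = (\<Sum>n\<in>{N..<M}. blinfun_apply (G n) (labs (xs n)))"
    by (rule sum.cong) auto
  finally show ?thesis using M by auto
qed

lemma harmonic_powr_summable: "summable (\<lambda>k. (inverse (real (Suc k))) powr q)"
proof -
  have "summable (\<lambda>n. real n powr (- q))" using q1 by (simp add: summable_real_powr_iff)
  then have "summable (\<lambda>n. real (Suc n) powr (- q))" by (subst summable_Suc_iff)
  moreover have "real (Suc n) powr (- q) = (inverse (real (Suc n))) powr q" for n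
    by (simp add: powr_minus_divide inverse_powr divide_inverse)
  ultimately show ?thesis by simp
qed

lemma harmonic_not_summable: "\<not> summable (\<lambda>k. inverse (real (Suc k)))"
proof
  assume "summable (\<lambda>k. inverse (real (Suc k)))"
  then have "summable (\<lambda>k. inverse (real k))" by (subst (asm) summable_Suc_iff)
  then show False using not_summable_harmonic[where 'a=real] by simp
qed

lemma Tail0:
  assumes xs: "in_lpi q (xs::nat \<Rightarrow> 'a::banach_lattice)" and e: "0 < e"
  shows "\<exists>N0. \<forall>G\<in>Bset. (\<Sum>n. blinfun_apply (G n) (labs (if n < N0 then 0 else xs n))) \<le> e"
proof (rule ccontr)
  assume "\<not> ?thesis"
  then have "\<forall>N. \<exists>G. G \<in> Bset \<and> e < (\<Sum>n. blinfun_apply (G n) (labs (if n < N then 0 else xs n)))"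
    by (auto simp: not_le)
  then obtain g where g: "\<And>N. g N \<in> Bset"
    "\<And>N. e < (\<Sum>n. blinfun_apply (g N n) (labs (if n < N then 0 else xs n)))"
    by metis
  let ?u = "\<lambda>G n. blinfun_apply (G n) (labs (xs n))"
  define nxt where "nxt N = (SOME M. N < M \<and> e < (\<Sum>n\<in>{N..<M}. ?u (g N) n))" for N
  have nxt: "N < nxt N \<and> e < (\<Sum>n\<in>{N..<nxt N}. ?u (g N) n)" for N
    unfolding nxt_def by (rule someI_ex) (rule exists_block[OF xs g(1) g(2)])
  define Nk where "Nk = rec_nat 0 (\<lambda>_ N. nxt N)"
  have Nk0: "Nk 0 = 0" by (simp add: Nk_def)
  have NkS: "Nk (Suc k) = nxt (Nk k)" for k by (simp add: Nk_def)
  have Nk_lt: "Nk k < Nk (Suc k)" for k using nxt NkS by simp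
  have Nk_sm: "strict_mono Nk" using Nk_lt by (simp add: strict_mono_Suc_iff)
  have Nk_ge: "k \<le> Nk k" for k using strict_mono_imp_increasing[OF Nk_sm] by simp
  have Nk_le: "\<And>k. Nk k \<le> Nk (Suc k)" using Nk_lt less_imp_le by blast
  define h where "h k = g (Nk k)" for k
  have hB: "h k \<in> Bset" for k by (simp add: h_def g)
  have hblock: "e < (\<Sum>n\<in>{Nk k..<Nk (Suc k)}. ?u (h k) n)" for k
    using nxt[of "Nk k"] by (simp add: NkS h_def)
  define a where "a k = inverse (real (Suc k))" for k
  have a0: "0 \<le> a k" for k by (simp add: a_def)
  define kidx where "kidx n = (LEAST k. n < Nk (Suc k))" for n
  have kidx: "kidx n = k" if "Nk k \<le> n" "n < Nk (Suc k)" for n k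
    unfolding kidx_def
  proof (rule Least_equality)
    show "n < Nk (Suc k)" by fact
    fix j assume j: "n < Nk (Suc j)"
    show "k \<le> j"
    proof (rule ccontr)
      assume "\<not> k \<le> j"
      then have "Suc j \<le> k" by simp
      then have "Nk (Suc j) \<le> Nk k" using Nk_sm by (simp add: strict_mono_less_eq)
      then show False using j that by simp
    qed
  qed
  define G' where "G' n = a (kidx n) *\<^sub>R h (kidx n) n" for n
  have G'blk: "G' n = a k *\<^sub>R h k n" if "n \<in> {Nk k..<Nk (Suc k)}" for n k
    using kidx[of k n] that by (simp add: G'_def)
  have hpos: "dual_le 0 (h k n)" for k n using hB[of k] by (simp add: Bset_def pos_seq_def)
  have G'pos: "dual_le 0 (G' n)" for n
    using hpos a0 unfolding G'_def dual_le_def by (simp add: blinfun.scaleR_left)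
  have G'abs: "dual_abs (G' n) = G' n" for n by (rule dual_abs_pos[OF G'pos])
  have G'ps: "pos_seq G'" using G'pos by (simp add: pos_seq_def)
  have G'lw: "in_lw q G'"
    unfolding in_lw_def
  proof (intro allI impI)
    fix x :: 'a assume x: "0 \<le> x"
    let ?t = "\<lambda>n. (blinfun_apply (dual_abs (G' n)) x) powr q"
    define A where "A = (\<Sum>k. (a k) powr q)"
    have Asum: "summable (\<lambda>k. (a k) powr q)" using harmonic_powr_summable by (simp add: a_def)
    show "summable ?t"
    proof (rule summableI_nonneg_bounded[where x="A * (norm x) powr q"])
      fix n show "0 \<le> ?t n" by simp
    next
      fix M
      have "(\<Sum>n<M. ?t n) \<le> (\<Sum>n<Nk M. ?t n)"
        by (rule sum_mono2) (use Nk_ge[of M] in auto)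
      also have "\<dots> = (\<Sum>k<M. \<Sum>n\<in>{Nk k..<Nk (Suc k)}. ?t n)"
        by (rule block_sum[OF Nk_le Nk0])
      also have "\<dots> \<le> (\<Sum>k<M. (a k) powr q * (norm x) powr q)"
      proof (rule sum_mono)
        fix k
        have "(\<Sum>n\<in>{Nk k..<Nk (Suc k)}. ?t n)
            = (\<Sum>n\<in>{Nk k..<Nk (Suc k)}. (a k) powr q * (blinfun_apply (h k n) x) powr q)"
        proof (rule sum.cong[OF refl])
          fix n assume n: "n \<in> {Nk k..<Nk (Suc k)}"
          have "?t n = (blinfun_apply (G' n) x) powr q" by (simp only: G'abs)
          also have "\<dots> = (a k) powr q * (blinfun_apply (h k n) x) powr q"
            by (simp add: G'blk[OF n] blinfun.scaleR_left powr_mult)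
          finally show "?t n = (a k) powr q * (blinfun_apply (h k n) x) powr q" .
        qed
        also have "\<dots> = (a k) powr q * (\<Sum>n\<in>{Nk k..<Nk (Suc k)}. (blinfun_apply (h k n) x) powr q)"
          by (simp add: sum_distrib_left)
        also have "(\<Sum>n\<in>{Nk k..<Nk (Suc k)}. (blinfun_apply (h k n) x) powr q) \<le> Sq (h k) x"
          unfolding Sq_def B_abs[OF hB[of k]]
          by (rule sum_le_suminf) (use in_lw_summable[OF B_lw[OF hB[of k]] x] B_abs[OF hB[of k]] in auto)
        also have "\<dots> \<le> (norm x) powr q" by (rule B_Sq_gen[OF hB x])
        finally show "(\<Sum>n\<in>{Nk k..<Nk (Suc k)}. ?t n) \<le> (a k) powr q * (norm x) powr q"
          by (simp add: mult_left_mono)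
      qed
      also have "\<dots> = (\<Sum>k<M. (a k) powr q) * (norm x) powr q" by (simp add: sum_distrib_right)
      also have "\<dots> \<le> A * (norm x) powr q"
        unfolding A_def by (intro mult_right_mono sum_le_suminf Asum) auto
      finally show "(\<Sum>n<M. ?t n) \<le> A * (norm x) powr q" .
    qed
  qed
  have sG: "summable (\<lambda>n. \<bar>blinfun_apply (G' n) (labs (xs n))\<bar>)"
    using xs G'lw G'ps unfolding in_lpi_def by blast
  define S where "S = (\<Sum>n. \<bar>blinfun_apply (G' n) (labs (xs n))\<bar>)"
  have "summable a"
  proof (rule summableI_nonneg_bounded[where x="S / e"])
    fix k show "0 \<le> a k" by (rule a0)
  next
    fix K
    have "e * (\<Sum>k<K. a k) = (\<Sum>k<K. a k * e)" by (simp add: sum_distrib_left mult.commute)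
    also have "\<dots> \<le> (\<Sum>k<K. a k * (\<Sum>n\<in>{Nk k..<Nk (Suc k)}. ?u (h k) n))"
      using hblock a0 by (intro sum_mono mult_left_mono) (auto intro: less_imp_le)
    also have "\<dots> = (\<Sum>k<K. \<Sum>n\<in>{Nk k..<Nk (Suc k)}. \<bar>blinfun_apply (G' n) (labs (xs n))\<bar>)"
    proof (rule sum.cong[OF refl])
      fix k
      have "a k * (\<Sum>n\<in>{Nk k..<Nk (Suc k)}. ?u (h k) n) = (\<Sum>n\<in>{Nk k..<Nk (Suc k)}. a k * ?u (h k) n)"
        by (simp add: sum_distrib_left)
      also have "\<dots> = (\<Sum>n\<in>{Nk k..<Nk (Suc k)}. \<bar>blinfun_apply (G' n) (labs (xs n))\<bar>)"
      proof (rule sum.cong[OF refl])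
        fix n assume n: "n \<in> {Nk k..<Nk (Suc k)}"
        have "0 \<le> ?u (h k) n" by (rule B_pos[OF hB labs_nonneg])
        then show "a k * ?u (h k) n = \<bar>blinfun_apply (G' n) (labs (xs n))\<bar>"
          using a0[of k] by (simp add: G'blk[OF n] blinfun.scaleR_left)
      qed
      finally show "a k * (\<Sum>n\<in>{Nk k..<Nk (Suc k)}. ?u (h k) n) = (\<Sum>n\<in>{Nk k..<Nk (Suc k)}. \<bar>blinfun_apply (G' n) (labs (xs n))\<bar>)" .
    qed
    also have "\<dots> = (\<Sum>n<Nk K. \<bar>blinfun_apply (G' n) (labs (xs n))\<bar>)"
      by (rule block_sum[OF Nk_le Nk0, symmetric])
    also have "\<dots> \<le> S" unfolding S_def by (rule sum_le_suminf[OF sG]) auto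
    finally show "(\<Sum>k<K. a k) \<le> S / e" using e by (simp add: field_simps)
  qed
  moreover have "a = (\<lambda>k. inverse (real (Suc k)))" by (rule ext) (simp add: a_def)
  ultimately show False using harmonic_not_summable by simp
qed

lemma Tail:
  assumes xs: "in_lpi q (xs::nat \<Rightarrow> 'a::banach_lattice)" and e: "0 < e"
  shows "\<exists>N0. \<forall>N\<ge>N0. \<forall>G\<in>Bset. (\<Sum>n. blinfun_apply (G n) (labs (if n < N then 0 else xs n))) \<le> e"
proof -
  obtain N0 where N0: "\<forall>G\<in>Bset. (\<Sum>n. blinfun_apply (G n) (labs (if n < N0 then 0 else xs n))) \<le> e"
    using Tail0[OF xs e] by blast
  show ?thesis
  proof (intro exI[of _ N0] allI impI ballI)
    fix N and G :: "nat \<Rightarrow> 'a \<Rightarrow>\<^sub>L real" assume N: "N0 \<le> N" and G: "G \<in> Bset"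
    show "(\<Sum>n. blinfun_apply (G n) (labs (if n < N then 0 else xs n))) \<le> e"
      by (rule order_trans[OF tail_mono[OF xs G N] N0[rule_format, OF G]])
  qed
qed

end



context conj begin

lemma lpi_bdd:
  assumes xs: "in_lpi q (xs::nat \<Rightarrow> 'a::banach_lattice)"
  shows "bdd_above ((\<lambda>G. \<Sum>n. blinfun_apply (G n) (labs (xs n))) ` Bset)"
proof -
  obtain N0 where N0: "\<forall>N\<ge>N0. \<forall>G\<in>Bset. (\<Sum>n. blinfun_apply (G n) (labs (if n < N then 0 else xs n))) \<le> 1"
    using Tail[OF xs, of 1] by auto
  show ?thesis
  proof (rule bdd_aboveI2)
    fix G :: "nat \<Rightarrow> 'a \<Rightarrow>\<^sub>L real" assume G: "G \<in> Bset"
    let ?u = "\<lambda>n. blinfun_apply (G n) (labs (xs n))"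
    let ?f = "\<lambda>n. if n < N0 then ?u n else 0"
    let ?g = "\<lambda>n. blinfun_apply (G n) (labs (if n < N0 then 0 else xs n))"
    have sf: "summable ?f" by (rule summable_finite[of "{..<N0}"]) auto
    have sg: "summable ?g" by (rule tail_summable[OF xs G])
    have "(\<Sum>n. ?u n) = (\<Sum>n. ?f n + ?g n)"
      by (rule arg_cong[where f=suminf]) (auto simp: fun_eq_iff)
    also have "\<dots> = (\<Sum>n. ?f n) + (\<Sum>n. ?g n)" by (rule suminf_add[OF sf sg, symmetric])
    also have "(\<Sum>n. ?f n) = (\<Sum>n<N0. ?u n)" by (subst suminf_finite[of "{..<N0}"]) auto
    also have "\<dots> \<le> (\<Sum>n<N0. norm (xs n))"
      by (rule sum_mono) (metis B_le_norm[OF G labs_nonneg] norm_labs)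
    also have "(\<Sum>n. ?g n) \<le> 1" using N0 G by auto
    finally show "(\<Sum>n. ?u n) \<le> (\<Sum>n<N0. norm (xs n)) + 1" by simp
  qed
qed

lemma lpi_ge: "in_lpi q xs \<Longrightarrow> G \<in> Bset \<Longrightarrow> (\<Sum>n. blinfun_apply (G n) (labs (xs n))) \<le> lpi_norm q xs"
  unfolding lpi_norm_B by (rule cSUP_upper[OF _ lpi_bdd])

lemma lpi_nonneg: "in_lpi q xs \<Longrightarrow> 0 \<le> lpi_norm q xs"
  using lpi_ge[OF _ zero_B, of xs] by simp

lemma tail_lpi: "in_lpi q xs \<Longrightarrow> in_lpi q (\<lambda>n. if n < N then 0 else xs n)"
  unfolding in_lpi_def
proof (intro allI impI)
  fix F :: "nat \<Rightarrow> 'a::banach_lattice \<Rightarrow>\<^sub>L real"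
  assume xs: "\<forall>F. in_lw q F \<and> pos_seq F \<longrightarrow> summable (\<lambda>n. \<bar>blinfun_apply (F n) (labs (xs n))\<bar>)"
    and F: "in_lw q F \<and> pos_seq F"
  show "summable (\<lambda>n. \<bar>blinfun_apply (F n) (labs (if n < N then 0 else xs n))\<bar>)"
  proof (rule summable_comparison_test'[OF xs[rule_format, OF F], where N=0])
    fix n :: nat
    show "norm \<bar>blinfun_apply (F n) (labs (if n < N then 0 else xs n))\<bar> \<le> \<bar>blinfun_apply (F n) (labs (xs n))\<bar>"
      by simp
  qed
qed

lemma lpi_tail_small:
  assumes xs: "in_lpi q xs" and e: "0 < e"
  shows "\<exists>N0. \<forall>N\<ge>N0. lpi_norm q (\<lambda>n. if n < N then 0 else xs n) \<le> e"
proof -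
  obtain N0 where N0: "\<forall>N\<ge>N0. \<forall>G\<in>Bset. (\<Sum>n. blinfun_apply (G n) (labs (if n < N then 0 else xs n))) \<le> e"
    using Tail[OF xs e] by blast
  show ?thesis
  proof (intro exI[of _ N0] allI impI)
    fix N assume "N0 \<le> N"
    then show "lpi_norm q (\<lambda>n. if n < N then 0 else xs n) \<le> e"
      unfolding lpi_norm_B using N0 by (intro cSUP_least[OF Bset_ne]) auto
  qed
qed

lemma zero_lpi: "in_lpi q (\<lambda>n. 0::'a::banach_lattice)"
  by (rule fin_lpi[of 0]) auto

lemma zero_lpi_norm: "lpi_norm q (\<lambda>n. 0::'a::banach_lattice) \<le> 1"
  unfolding lpi_norm_B by (rule cSUP_least[OF Bset_ne]) simp

section \<open>The modulus sequence\<close>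

lemma absF_lw:
  assumes F: "in_lw q F"
  shows "in_lw q (\<lambda>n. dual_abs (F n))" "pos_seq (\<lambda>n. dual_abs (F n))"
proof -
  have d: "dual_abs (dual_abs (F n)) = dual_abs (F n)" for n by (rule dual_abs_pos[OF dual_abs_nonneg])
  show "in_lw q (\<lambda>n. dual_abs (F n))" using F unfolding in_lw_def d .
  show "pos_seq (\<lambda>n. dual_abs (F n))" by (simp add: pos_seq_def dual_abs_nonneg)
qed

lemma absF_summable:
  assumes F: "in_lw q F" and xs: "in_lpi q xs"
  shows "summable (\<lambda>n. blinfun_apply (dual_abs (F n)) (labs (xs n)))"
proof -
  have "summable (\<lambda>n. \<bar>blinfun_apply (dual_abs (F n)) (labs (xs n))\<bar>)"
    using xs absF_lw[OF F] unfolding in_lpi_def by blast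
  then show ?thesis by (simp add: abs_of_nonneg dual_abs_ge(3) labs_nonneg)
qed

lemma canon_summable:
  assumes F: "in_lw q F" and xs: "in_lpi q xs"
  shows "summable (\<lambda>n. \<bar>blinfun_apply (F n) (xs n)\<bar>)" "summable (\<lambda>n. blinfun_apply (F n) (xs n))"
proof -
  show a: "summable (\<lambda>n. \<bar>blinfun_apply (F n) (xs n)\<bar>)"
    by (rule summable_rabs_comparison_test[OF _ absF_summable[OF F xs]]) (auto intro: dual_abs_bound)
  show "summable (\<lambda>n. blinfun_apply (F n) (xs n))"
    by (rule summable_rabs_cancel[OF a])
qed

lemma absF_le:
  assumes F: "in_lw q F" and xs: "in_lpi q xs"
  shows "(\<Sum>n. blinfun_apply (dual_abs (F n)) (labs (xs n))) \<le> lw_norm q F * lpi_norm q xs"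
proof (rule field_le_epsilon)
  fix e :: real assume e: "0 < e"
  define L where "L = lw_norm q F"
  define P where "P = lpi_norm q xs"
  have L0: "0 \<le> L" unfolding L_def by (rule lw_nonneg[OF F])
  have P0: "0 \<le> P" unfolding P_def by (rule lpi_nonneg[OF xs])
  define c where "c = L + e / (P + 1)"
  have c: "0 < c" unfolding c_def using L0 e P0 by (simp add: add_nonneg_pos)
  define G where "G n = (1/c) *\<^sub>R dual_abs (F n)" for n
  have Gpos: "dual_le 0 (G n)" for n
    using dual_abs_nonneg[of "F n"] c unfolding G_def dual_le_def by (simp add: blinfun.scaleR_left)
  have Gabs: "dual_abs (G n) = G n" for n by (rule dual_abs_pos[OF Gpos])
  have Gterm: "(blinfun_apply (dual_abs (G n)) x) powr q = (1/c) powr q * (blinfun_apply (dual_abs (F n)) x) powr q" for n x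
  proof -
    have "blinfun_apply (dual_abs (G n)) x = (1/c) * blinfun_apply (dual_abs (F n)) x"
      unfolding Gabs by (simp add: G_def blinfun.scaleR_left)
    then show ?thesis by (simp only: powr_mult)
  qed
  have Glw: "in_lw q G"
    unfolding in_lw_def Gterm using F by (auto intro: summable_mult simp: in_lw_def)
  have GSq: "Sq G x = (1/c) powr q * Sq F x" if "0 \<le> x" for x
    unfolding Sq_def Gterm by (rule suminf_mult) (rule in_lw_summable[OF F that])
  have GB: "G \<in> Bset"
    unfolding Bset_def
  proof (intro CollectI conjI)
    show "in_lw q G" by (rule Glw)
    show "pos_seq G" using Gpos by (simp add: pos_seq_def)
    show "lw_norm q G \<le> 1"
    proof (rule lw_least)
      fix x :: 'a assume x: "0 \<le> x" "norm x \<le> 1"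
      have "(Sq G x) powr (1/q) = (1/c) * (Sq F x) powr (1/q)"
        using c q_pos Sq_nonneg[OF F x(1)] by (simp add: GSq[OF x(1)] powr_mult powr_powr)
      also have "\<dots> \<le> (1/c) * L" unfolding L_def using c by (intro mult_left_mono lw_le[OF F x]) auto
      also have "\<dots> \<le> 1" using c e P0 by (simp add: c_def field_simps)
      finally show "(Sq G x) powr (1/q) \<le> 1" .
    qed
  qed
  have "(\<Sum>n. blinfun_apply (G n) (labs (xs n))) \<le> P" unfolding P_def by (rule lpi_ge[OF xs GB])
  moreover have "(\<Sum>n. blinfun_apply (G n) (labs (xs n))) = (1/c) * (\<Sum>n. blinfun_apply (dual_abs (F n)) (labs (xs n)))"
    unfolding G_def by (simp add: blinfun.scaleR_left suminf_divide absF_summable[OF F xs])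
  ultimately have "(\<Sum>n. blinfun_apply (dual_abs (F n)) (labs (xs n))) \<le> c * P"
    using c by (simp add: field_simps)
  also have "c * P = L * P + e * (P / (P + 1))" unfolding c_def using P0 by (simp add: field_simps)
  also have "\<dots> \<le> L * P + e" using e P0 by (simp add: mult_left_le field_simps)
  finally show "(\<Sum>n. blinfun_apply (dual_abs (F n)) (labs (xs n))) \<le> lw_norm q F * lpi_norm q xs + e"
    by (simp add: L_def P_def)
qed

lemma canon_bound:
  assumes F: "in_lw q F" and xs: "in_lpi q xs"
  shows "\<bar>canon F xs\<bar> \<le> lw_norm q F * lpi_norm q xs"
proof -
  have "\<bar>canon F xs\<bar> \<le> (\<Sum>n. \<bar>blinfun_apply (F n) (xs n)\<bar>)"
    unfolding canon_def by (rule summable_rabs[OF canon_summable(1)[OF F xs]])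
  also have "\<dots> \<le> (\<Sum>n. blinfun_apply (dual_abs (F n)) (labs (xs n)))"
    by (rule suminf_le[OF dual_abs_bound canon_summable(1)[OF F xs] absF_summable[OF F xs]])
  also have "\<dots> \<le> lw_norm q F * lpi_norm q xs" by (rule absF_le[OF F xs])
  finally show ?thesis .
qed

end



context conj begin

lemma lower_key:
  fixes f :: "nat \<Rightarrow> 'a::banach_lattice \<Rightarrow>\<^sub>L real"
  assumes x: "0 \<le> x" and D: "0 \<le> D"
    and H: "\<And>a y. (\<And>n. n < N \<Longrightarrow> 0 \<le> a n) \<Longrightarrow> (\<Sum>n<N. a n powr p) \<le> 1 \<Longrightarrow>
              (\<And>n. n < N \<Longrightarrow> labs (y n) \<le> x) \<Longrightarrow> (\<Sum>n<N. a n * blinfun_apply (f n) (y n)) \<le> D"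
  shows "(\<Sum>n<N. (blinfun_apply (dual_abs (f n)) x) powr q) \<le> D powr q"
proof -
  define b where "b n = blinfun_apply (dual_abs (f n)) x" for n
  have b0: "0 \<le> b n" for n unfolding b_def by (rule dual_abs_ge(3)[OF x])
  define T where "T = (\<Sum>n<N. b n powr q)"
  have T0: "0 \<le> T" unfolding T_def by (simp add: sum_nonneg)
  show ?thesis
  proof (cases "T = 0")
    case True then show ?thesis by (simp add: T_def[symmetric, unfolded b_def])
  next
    case False
    with T0 have T: "0 < T" by simp
    define a where "a n = b n powr (q - 1) / T powr (1/p)" for n
    have a0: "0 \<le> a n" for n unfolding a_def by simp
    have asum: "(\<Sum>n<N. a n powr p) = 1"
    proof -
      have "a n powr p = b n powr q / T" for n
      proof -
        have "a n powr p = (b n powr (q - 1)) powr p / (T powr (1/p)) powr p"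
          unfolding a_def by (rule powr_divide)
        also have "(b n powr (q - 1)) powr p = b n powr q" by (simp add: powr_powr qp)
        also have "(T powr (1/p)) powr p = T" using p_pos T by (simp add: powr_powr)
        finally show ?thesis .
      qed
      then have "(\<Sum>n<N. a n powr p) = (\<Sum>n<N. b n powr q) / T" by (simp add: sum_divide_distrib)
      then show ?thesis using T by (simp add: T_def)
    qed
    have ab: "(\<Sum>n<N. a n * b n) = T powr (1/q)"
    proof -
      have "a n * b n = b n powr q / T powr (1/p)" for n
      proof -
        have "b n * b n powr (q - 1) = b n powr (1 + (q - 1))" by (rule powr_mult_base[OF b0])
        then show ?thesis unfolding a_def by (simp add: mult.commute)
      qed
      then have "(\<Sum>n<N. a n * b n) = T / T powr (1/p)" by (simp add: sum_divide_distrib T_def)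
      also have "\<dots> = T powr (1 - 1/p)" using T by (simp add: powr_diff)
      also have "1 - 1/p = 1/q" using pq by simp
      finally show ?thesis .
    qed
    define A where "A = (\<Sum>n<N. a n)"
    have A0: "0 \<le> A" unfolding A_def by (simp add: sum_nonneg a0)
    have TD: "T powr (1/q) \<le> D"
    proof (rule field_le_epsilon)
      fix e :: real assume e: "0 < e"
      define eps where "eps = e / (A + 1)"
      have eps: "0 < eps" unfolding eps_def using e A0 by simp
      have "\<forall>n. \<exists>z. labs z \<le> x \<and> b n - eps < blinfun_apply (f n) z"
        unfolding b_def using dual_abs_approx[OF x eps] by blast
      then obtain y where y: "\<And>n. labs (y n) \<le> x" "\<And>n. b n - eps < blinfun_apply (f n) (y n)" by metis
      have "T powr (1/q) - eps * A = (\<Sum>n<N. a n * (b n - eps))"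
        unfolding ab[symmetric] A_def by (simp add: algebra_simps sum_subtractf sum_distrib_left)
      also have "\<dots> \<le> (\<Sum>n<N. a n * blinfun_apply (f n) (y n))"
        by (rule sum_mono) (rule mult_left_mono[OF less_imp_le[OF y(2)] a0])
      also have "\<dots> \<le> D" by (rule H) (use a0 asum y(1) in auto)
      finally have "T powr (1/q) \<le> D + eps * A" by simp
      also have "eps * A \<le> e" unfolding eps_def using e A0 by (simp add: field_simps)
      finally show "T powr (1/q) \<le> D + e" by simp
    qed
    have "T = (T powr (1/q)) powr q" using T q_pos by (simp add: powr_powr)
    also have "\<dots> \<le> D powr q" by (rule powr_mono2) (use q_pos TD in auto)
    finally show ?thesis by (simp add: T_def b_def)
  qed
qed

lemma canon_fin:
  "canon F (\<lambda>n. if n < N then a n *\<^sub>R y n else 0) = (\<Sum>n<N. a n * blinfun_apply (F n) (y n))"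
  unfolding canon_def by (subst suminf_finite[of "{..<N}"]) (auto simp: blinfun.scaleR_right)

lemma canon_single: "canon F (\<lambda>k. if k = n then y else 0) = blinfun_apply (F n) y"
  unfolding canon_def by (subst suminf_finite[of "{n}"]) auto

lemma canon_zero: "canon F (\<lambda>n. 0) = 0"
  unfolding canon_def by simp

lemma isometry:
  assumes F: "in_lw q (F::nat \<Rightarrow> 'a::banach_lattice \<Rightarrow>\<^sub>L real)"
  shows "lpi_dual_norm q (canon F) = lw_norm q F"
proof -
  define Xs where "Xs = {xs::nat \<Rightarrow> 'a. in_lpi q xs \<and> lpi_norm q xs \<le> 1}"
  define L where "L = lw_norm q F"
  have L0: "0 \<le> L" unfolding L_def by (rule lw_nonneg[OF F])
  have Deq: "lpi_dual_norm q (canon F) = (SUP xs\<in>Xs. \<bar>canon F xs\<bar>)"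
    by (simp add: lpi_dual_norm_def Xs_def)
  have bnd: "\<bar>canon F xs\<bar> \<le> L" if "xs \<in> Xs" for xs
  proof -
    have "\<bar>canon F xs\<bar> \<le> L * lpi_norm q xs" unfolding L_def using that
      by (intro canon_bound[OF F]) (simp add: Xs_def)
    also have "\<dots> \<le> L * 1" using that L0 by (intro mult_left_mono) (auto simp: Xs_def)
    finally show ?thesis by simp
  qed
  have bdd: "bdd_above ((\<lambda>xs. \<bar>canon F xs\<bar>) ` Xs)" using bnd by (intro bdd_aboveI2)
  have z: "(\<lambda>n. 0) \<in> Xs" by (simp add: Xs_def zero_lpi zero_lpi_norm)
  have ne: "Xs \<noteq> {}" using z by blast
  define D where "D = lpi_dual_norm q (canon F)"
  have Dup: "\<bar>canon F xs\<bar> \<le> D" if "xs \<in> Xs" for xs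
    unfolding D_def Deq by (rule cSUP_upper[OF that bdd])
  have D0: "0 \<le> D" using Dup[OF z] by (simp add: canon_zero)
  have "D \<le> L" unfolding D_def Deq by (rule cSUP_least[OF ne bnd])
  moreover have "L \<le> D"
    unfolding L_def
  proof (rule lw_least)
    fix x :: 'a assume x: "0 \<le> x" "norm x \<le> 1"
    have "Sq F x \<le> D powr q"
      unfolding Sq_def
    proof (rule suminf_le_const[OF in_lw_summable[OF F x(1)]])
      fix N
      show "(\<Sum>n<N. (blinfun_apply (dual_abs (F n)) x) powr q) \<le> D powr q"
      proof (rule lower_key[OF x(1) D0])
        fix a and y :: "nat \<Rightarrow> 'a"
        assume a: "\<And>n. n < N \<Longrightarrow> 0 \<le> a n" "(\<Sum>n<N. a n powr p) \<le> 1"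
          and y: "\<And>n. n < N \<Longrightarrow> labs (y n) \<le> x"
        have "(\<lambda>n. if n < N then a n *\<^sub>R y n else 0) \<in> Xs"
          unfolding Xs_def using Key[OF x a y] by simp
        then have "\<bar>canon F (\<lambda>n. if n < N then a n *\<^sub>R y n else 0)\<bar> \<le> D" by (rule Dup)
        then show "(\<Sum>n<N. a n * blinfun_apply (F n) (y n)) \<le> D" by (simp add: canon_fin)
      qed
    qed
    then have "(Sq F x) powr (1/q) \<le> (D powr q) powr (1/q)"
      by (rule powr_mono2[rotated 2]) (use q_pos Sq_nonneg[OF F x(1)] in auto)
    also have "\<dots> = D" using D0 q_pos by (simp add: powr_powr powr_one)
    finally show "(Sq F x) powr (1/q) \<le> D" .
  qed
  ultimately show ?thesis unfolding D_def L_def by simp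
qed

end



context conj begin

lemma surj:
  assumes phi: "lpi_dual q (\<phi> :: (nat \<Rightarrow> 'a::banach_lattice) \<Rightarrow> real)"
  shows "\<exists>F. in_lw q F \<and> (\<forall>xs. in_lpi q xs \<longrightarrow> \<phi> xs = canon F xs)"
proof -
  have lin: "linear_on_set {xs. in_lpi q xs} \<phi>" using phi by (simp add: lpi_dual_def)
  obtain C0 where C0: "\<And>xs. in_lpi q xs \<Longrightarrow> \<bar>\<phi> xs\<bar> \<le> C0 * lpi_norm q xs"
    using phi unfolding lpi_dual_def by blast
  define C where "C = max C0 0"
  have C0': "0 \<le> C" by (simp add: C_def)
  have Cb: "\<bar>\<phi> xs\<bar> \<le> C * lpi_norm q xs" if "in_lpi q xs" for xs
  proof -
    have "C0 * lpi_norm q xs \<le> C * lpi_norm q xs"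
      by (rule mult_right_mono) (auto simp: C_def lpi_nonneg[OF that])
    then show ?thesis using C0[OF that] by simp
  qed
  have add: "\<phi> (\<lambda>n. x n + y n) = \<phi> x + \<phi> y" if "in_lpi q x" "in_lpi q y" for x y
    using lin that unfolding linear_on_set_def by blast
  have scal: "\<phi> (\<lambda>n. c *\<^sub>R x n) = c * \<phi> x" if "in_lpi q x" for x c
    using lin that unfolding linear_on_set_def by blast
  have phi0: "\<phi> (\<lambda>n. 0) = 0" using scal[OF zero_lpi, of 0] by simp
  define e where "e n y = (\<lambda>k::nat. if k = n then y else (0::'a))" for n :: nat and y
  have e_lpi: "in_lpi q (e n y)" for n y unfolding e_def by (rule single_lpi)
  have bl: "bounded_linear (\<lambda>y. \<phi> (e n y))" for n
  proof (rule bounded_linear_intro)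
    fix y z :: 'a
    have "e n (y + z) = (\<lambda>k. e n y k + e n z k)" by (auto simp: e_def)
    then show "\<phi> (e n (y + z)) = \<phi> (e n y) + \<phi> (e n z)" using add[OF e_lpi e_lpi] by simp
  next
    fix r and y :: 'a
    have "e n (r *\<^sub>R y) = (\<lambda>k. r *\<^sub>R e n y k)" by (auto simp: e_def)
    then show "\<phi> (e n (r *\<^sub>R y)) = r *\<^sub>R \<phi> (e n y)" using scal[OF e_lpi] by simp
  next
    fix y :: 'a
    have "\<bar>\<phi> (e n y)\<bar> \<le> C * lpi_norm q (e n y)" by (rule Cb[OF e_lpi])
    also have "\<dots> \<le> C * norm y" unfolding e_def by (rule mult_left_mono[OF single_norm C0'])
    finally show "norm (\<phi> (e n y)) \<le> norm y * C" by (simp add: mult.commute)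
  qed
  define F where "F n = Blinfun (\<lambda>y. \<phi> (e n y))" for n
  have Fapp: "blinfun_apply (F n) y = \<phi> (e n y)" for n y
    unfolding F_def using bounded_linear_Blinfun_apply[OF bl] by simp
  have finlin: "\<phi> (\<lambda>k. if k < N then w k else 0) = (\<Sum>n<N. \<phi> (e n (w n)))" for N w
  proof (induction N)
    case 0 then show ?case using phi0 by simp
  next
    case (Suc N)
    have "(\<lambda>k. if k < Suc N then w k else 0) = (\<lambda>k. (if k < N then w k else 0) + e N (w N) k)"
      by (auto simp: e_def fun_eq_iff)
    moreover have "in_lpi q (\<lambda>k. if k < N then w k else 0)" by (rule fin_lpi[of N]) auto
    ultimately have "\<phi> (\<lambda>k. if k < Suc N then w k else 0) = \<phi> (\<lambda>k. if k < N then w k else 0) + \<phi> (e N (w N))"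
      using add[OF _ e_lpi] by simp
    then show ?case using Suc by simp
  qed
  have Ffin: "\<phi> (\<lambda>k. if k < N then a k *\<^sub>R y k else 0) = (\<Sum>n<N. a n * blinfun_apply (F n) (y n))" for N a y
  proof -
    have "\<phi> (e n (a n *\<^sub>R y n)) = a n * \<phi> (e n (y n))" for n
    proof -
      have "e n (a n *\<^sub>R y n) = (\<lambda>k. a n *\<^sub>R e n (y n) k)" by (auto simp: e_def)
      then show ?thesis using scal[OF e_lpi] by simp
    qed
    then show ?thesis by (simp add: finlin Fapp)
  qed
  have unit_sum: "summable (\<lambda>n. (blinfun_apply (dual_abs (F n)) x) powr q)" if x: "0 \<le> x" "norm x \<le> 1" for x
  proof (rule summableI_nonneg_bounded[where x="C powr q"])
    fix n show "0 \<le> (blinfun_apply (dual_abs (F n)) x) powr q" by simp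
  next
    fix N
    show "(\<Sum>n<N. (blinfun_apply (dual_abs (F n)) x) powr q) \<le> C powr q"
    proof (rule lower_key[OF x(1) C0'])
      fix a and y :: "nat \<Rightarrow> 'a"
      assume a: "\<And>n. n < N \<Longrightarrow> 0 \<le> a n" "(\<Sum>n<N. a n powr p) \<le> 1"
        and y: "\<And>n. n < N \<Longrightarrow> labs (y n) \<le> x"
      have "(\<Sum>n<N. a n * blinfun_apply (F n) (y n)) = \<phi> (\<lambda>k. if k < N then a k *\<^sub>R y k else 0)"
        by (rule Ffin[symmetric])
      also have "\<dots> \<le> \<bar>\<phi> (\<lambda>k. if k < N then a k *\<^sub>R y k else 0)\<bar>" by simp
      also have "\<dots> \<le> C * lpi_norm q (\<lambda>k. if k < N then a k *\<^sub>R y k else 0)" by (rule Cb[OF Key(1)[OF x a y]])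
      also have "\<dots> \<le> C * 1" by (rule mult_left_mono[OF Key(2)[OF x a y] C0'])
      finally show "(\<Sum>n<N. a n * blinfun_apply (F n) (y n)) \<le> C" by simp
    qed
  qed
  have Flw: "in_lw q F"
    unfolding in_lw_def
  proof (intro allI impI)
    fix x :: 'a assume x: "0 \<le> x"
    show "summable (\<lambda>n. (blinfun_apply (dual_abs (F n)) x) powr q)"
    proof (cases "x = 0")
      case True then show ?thesis by simp
    next
      case False
      define c where "c = norm x"
      have c: "0 < c" using False by (simp add: c_def)
      define x' where "x' = (1/c) *\<^sub>R x"
      have x': "0 \<le> x'" "norm x' \<le> 1" using x c by (auto simp: x'_def c_def intro: scaleR_nonneg_nonneg)
      have xx: "x = c *\<^sub>R x'" using c by (simp add: x'_def)
      have "(blinfun_apply (dual_abs (F n)) x) powr q = c powr q * (blinfun_apply (dual_abs (F n)) x') powr q" for n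
        unfolding xx by (simp add: blinfun.scaleR_right powr_mult)
      then show ?thesis using summable_mult[OF unit_sum[OF x'], of "c powr q"] by simp
    qed
  qed
  have rep: "\<phi> xs = canon F xs" if xs: "in_lpi q xs" for xs
  proof -
    have part: "(\<Sum>n<N. blinfun_apply (F n) (xs n)) = \<phi> (\<lambda>k. if k < N then xs k else 0)" for N
      by (simp add: finlin Fapp)
    have split: "\<phi> xs = \<phi> (\<lambda>k. if k < N then xs k else 0) + \<phi> (\<lambda>k. if k < N then 0 else xs k)" for N
    proof -
      have "xs = (\<lambda>k. (if k < N then xs k else 0) + (if k < N then 0 else xs k))" by (auto simp: fun_eq_iff)
      moreover have "in_lpi q (\<lambda>k. if k < N then xs k else 0)" by (rule fin_lpi[of N]) auto
      ultimately show ?thesis using add[OF _ tail_lpi[OF xs]] by metis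
    qed
    have "(\<lambda>N. \<Sum>n<N. blinfun_apply (F n) (xs n)) \<longlonglongrightarrow> \<phi> xs"
    proof (rule LIMSEQ_I)
      fix r :: real assume r: "0 < r"
      define eps where "eps = r / (C + 1)"
      have eps: "0 < eps" using r C0' by (simp add: eps_def)
      obtain N0 where N0: "\<And>N. N0 \<le> N \<Longrightarrow> lpi_norm q (\<lambda>n. if n < N then 0 else xs n) \<le> eps"
        using lpi_tail_small[OF xs eps] by blast
      show "\<exists>no. \<forall>N\<ge>no. norm ((\<Sum>n<N. blinfun_apply (F n) (xs n)) - \<phi> xs) < r"
      proof (intro exI allI impI)
        fix N assume N: "N0 \<le> N"
        have "norm ((\<Sum>n<N. blinfun_apply (F n) (xs n)) - \<phi> xs) = \<bar>\<phi> (\<lambda>k. if k < N then 0 else xs k)\<bar>"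
          using split[of N] part[of N] by simp
        also have "\<dots> \<le> C * lpi_norm q (\<lambda>k. if k < N then 0 else xs k)" by (rule Cb[OF tail_lpi[OF xs]])
        also have "\<dots> \<le> C * eps" by (rule mult_left_mono[OF N0[OF N] C0'])
        also have "\<dots> < r" unfolding eps_def using r C0' by (simp add: field_simps)
        finally show "norm ((\<Sum>n<N. blinfun_apply (F n) (xs n)) - \<phi> xs) < r" .
      qed
    qed
    then have "(\<lambda>n. blinfun_apply (F n) (xs n)) sums \<phi> xs" by (simp add: sums_def)
    then show ?thesis unfolding canon_def by (rule sums_unique)
  qed
  show ?thesis using Flw rep by blast
qed

end



context conj begin

lemma welldef:
  assumes F: "in_lw q (F::nat \<Rightarrow> 'a::banach_lattice \<Rightarrow>\<^sub>L real)"
  shows "lpi_dual q (canon F)"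
  unfolding lpi_dual_def linear_on_set_def
proof (intro conjI ballI allI impI)
  fix x y :: "nat \<Rightarrow> 'a" assume x: "x \<in> {xs. in_lpi q xs}" and y: "y \<in> {xs. in_lpi q xs}"
  show "canon F (\<lambda>n. x n + y n) = canon F x + canon F y"
    unfolding canon_def blinfun.add_right
    by (rule suminf_add[symmetric]) (use canon_summable(2)[OF F] x y in auto)
next
  fix x :: "nat \<Rightarrow> 'a" and c :: real assume x: "x \<in> {xs. in_lpi q xs}"
  show "canon F (\<lambda>n. c *\<^sub>R x n) = c * canon F x"
    unfolding canon_def blinfun.scaleR_right real_scaleR_def
    by (rule suminf_mult) (use canon_summable(2)[OF F] x in auto)
next
  show "\<exists>C. \<forall>xs. in_lpi q xs \<longrightarrow> \<bar>canon F xs\<bar> \<le> C * lpi_norm q xs"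
    using canon_bound[OF F] by blast
qed

lemma injective:
  assumes "\<forall>xs. in_lpi q xs \<longrightarrow> canon F xs = canon G xs"
  shows "F = (G::nat \<Rightarrow> 'a::banach_lattice \<Rightarrow>\<^sub>L real)"
proof (rule ext, rule blinfun_eqI)
  fix n and y :: 'a
  have "canon F (\<lambda>k. if k = n then y else 0) = canon G (\<lambda>k. if k = n then y else 0)"
    using assms single_lpi by blast
  then show "blinfun_apply (F n) y = blinfun_apply (G n) y" by (simp add: canon_single)
qed

lemma order_iso:
  assumes F: "in_lw q F" and G: "in_lw q (G::nat \<Rightarrow> 'a::banach_lattice \<Rightarrow>\<^sub>L real)"
  shows "(\<forall>n. dual_le (F n) (G n)) \<longleftrightarrow> lpi_dual_le q (canon F) (canon G)"
proof
  assume le: "\<forall>n. dual_le (F n) (G n)"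
  show "lpi_dual_le q (canon F) (canon G)"
    unfolding lpi_dual_le_def
  proof (intro allI impI)
    fix xs :: "nat \<Rightarrow> 'a" assume xs: "in_lpi q xs \<and> (\<forall>n. 0 \<le> xs n)"
    show "canon F xs \<le> canon G xs"
      unfolding canon_def
      by (rule suminf_le) (use le xs canon_summable(2)[OF F] canon_summable(2)[OF G] in \<open>auto simp: dual_le_def\<close>)
  qed
next
  assume le: "lpi_dual_le q (canon F) (canon G)"
  show "\<forall>n. dual_le (F n) (G n)"
    unfolding dual_le_def
  proof (intro allI impI)
    fix n and x :: 'a assume x: "0 \<le> x"
    have "in_lpi q (\<lambda>k. if k = n then x else 0) \<and> (\<forall>k. 0 \<le> (if k = n then x else 0))"
      using single_lpi x by simp
    then have "canon F (\<lambda>k. if k = n then x else 0) \<le> canon G (\<lambda>k. if k = n then x else 0)"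
      using le unfolding lpi_dual_le_def by blast
    then show "blinfun_apply (F n) x \<le> blinfun_apply (G n) x" by (simp add: canon_single)
  qed
qed

end

theorem theorem1p3:
  fixes p q :: real
  assumes "1 < p" and "1 / p + 1 / q = 1"
  shows
    \<comment> \<open>well-defined: the series converges and gives an element of the dual\<close>
    "(\<forall>F::nat \<Rightarrow> ('a::banach_lattice \<Rightarrow>\<^sub>L real). in_lw q F \<longrightarrow>
        (\<forall>xs. in_lpi q xs \<longrightarrow> summable (\<lambda>n. blinfun_apply (F n) (xs n))) \<and>
        lpi_dual q (canon F))
   \<and> \<comment> \<open>isometric\<close>
     (\<forall>F::nat \<Rightarrow> ('a \<Rightarrow>\<^sub>L real). in_lw q F \<longrightarrow> lpi_dual_norm q (canon F) = lw_norm q F)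
   \<and> \<comment> \<open>injective\<close>
     (\<forall>F G::nat \<Rightarrow> ('a \<Rightarrow>\<^sub>L real). in_lw q F \<longrightarrow> in_lw q G \<longrightarrow>
        (\<forall>xs. in_lpi q xs \<longrightarrow> canon F xs = canon G xs) \<longrightarrow> F = G)
   \<and> \<comment> \<open>surjective\<close>
     (\<forall>\<phi>::(nat \<Rightarrow> 'a) \<Rightarrow> real. lpi_dual q \<phi> \<longrightarrow>
        (\<exists>F. in_lw q F \<and> (\<forall>xs. in_lpi q xs \<longrightarrow> \<phi> xs = canon F xs)))
   \<and> \<comment> \<open>order (hence lattice) isomorphism: coordinatewise order corresponds to the dual order\<close>
     (\<forall>F G::nat \<Rightarrow> ('a \<Rightarrow>\<^sub>L real). in_lw q F \<longrightarrow> in_lw q G \<longrightarrow>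
        ((\<forall>n. dual_le (F n) (G n)) \<longleftrightarrow> lpi_dual_le q (canon F) (canon G)))"
proof -
  interpret conj p q using assms by unfold_locales
  show ?thesis
    using canon_summable(2) welldef isometry injective surj order_iso by blast
qed


end
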